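(* (i) The supremum defining $|B|_c^2$ is achieved. (ii) For any $B$ with $|B|<|B|_c$, the infimum defining $(|\xi|^B_{vc})^2$ is achieved; moreover, as a function of $|B|$ on $0<|B|<|B|_c$, $|\xi|^B_{vc}$ is continuous and strictly increasing, with $|\xi|^B_{vc}\to0$ as $|B|\to0$ and $|\xi|^B_{vc}\to\infty$ as $|B|\to|B|_c$. (iii) For any $B$ with $|B|<|B|_c$, the supremum defining $(|\xi|^B_{hc})^2$ is achieved; moreover, as a function of $|B|$ on $0<|B|<|B|_c$, $|\xi|^B_{hc}$ is continuous and strictly decreasing, with $|\xi|^B_{hc}\to\infty$ as $|B|\to0$ and $|\xi|^B_{hc}\to0$ as $|B|\to|B|_c$.
   Context: $g>0$, $[\rho]>0$ constants, $B\in\mathbb{R}$. $|B|_c^2:=\sup\{g[\rho]\psi(0)^2/\int_{-1}^1|\psi'|^2dx_2: 0\ne\psi\in H_0^1((-1,1))\}$; $(|\xi|^B_{vc})^2:=\inf\{|B|^2\int_{-1}^1|\psi''|^2dx_2/(g[\rho]\psi(0)^2-|B|^2\int_{-1}^1|\psi'|^2dx_2):\psi\in H_0^2((-1,1)),\ g[\rho]\psi(0)^2-|B|^2\int_{-1}^1|\psi'|^2dx_2>0\}$; $(|\xi|^B_{hc})^2:=\sup\{(g[\rho]\psi(0)^2-|B|^2\int_{-1}^1|\psi'|^2dx_2)/(|B|^2\int_{-1}^1|\psi|^2dx_2): 0\ne\psi\in H_0^1((-1,1))\}$. *)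

theory Defs
  imports "HOL-Analysis.Analysis"
begin

text \<open>Sobolev space H_0^1((-1,1)), one-dimensional: a function psi (its continuous
representative) together with its weak derivative d, where d is in L^2(-1,1),
psi is the indefinite integral of d starting at -1 (so psi(-1) = 0), and psi(1) = 0.\<close>
definition H01 :: "((real \<Rightarrow> real) \<times> (real \<Rightarrow> real)) set" where
  "H01 = {(\<psi>, d).
     set_borel_measurable lborel {-1..1} d \<and>
     set_integrable lborel {-1..1} (\<lambda>x. (d x)\<^sup>2) \<and>
     (\<forall>x\<in>{-1..1}. \<psi> x = set_lebesgue_integral lborel {-1..x} d) \<and>
     \<psi> 1 = 0}"

text \<open>H_0^2((-1,1)): psi with first and second weak derivatives d, dd such that
psi and d both lie in H_0^1 (so psi, psi' vanish at both endpoints, psi'' in L^2).\<close>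
definition H02 :: "((real \<Rightarrow> real) \<times> (real \<Rightarrow> real) \<times> (real \<Rightarrow> real)) set" where
  "H02 = {(\<psi>, d, dd). (\<psi>, d) \<in> H01 \<and> (d, dd) \<in> H01}"

definition nonzero :: "(real \<Rightarrow> real) \<Rightarrow> bool" where
  "nonzero \<psi> \<longleftrightarrow> (\<exists>x\<in>{-1..1}. \<psi> x \<noteq> 0)"

definition L2sq :: "(real \<Rightarrow> real) \<Rightarrow> real" where
  "L2sq f = set_lebesgue_integral lborel {-1..1} (\<lambda>x. (f x)\<^sup>2)"

text \<open>Quotients in the three variational problems (rho stands for the jump [rho]).\<close>
definition Qc :: "real \<Rightarrow> real \<Rightarrow> (real \<Rightarrow> real) \<Rightarrow> (real \<Rightarrow> real) \<Rightarrow> real" where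
  "Qc g rho \<psi> d = g * rho * (\<psi> 0)\<^sup>2 / L2sq d"

definition Dvc :: "real \<Rightarrow> real \<Rightarrow> real \<Rightarrow> (real \<Rightarrow> real) \<Rightarrow> (real \<Rightarrow> real) \<Rightarrow> real" where
  "Dvc g rho B \<psi> d = g * rho * (\<psi> 0)\<^sup>2 - \<bar>B\<bar>\<^sup>2 * L2sq d"

definition Qvc :: "real \<Rightarrow> real \<Rightarrow> real \<Rightarrow> (real \<Rightarrow> real) \<Rightarrow> (real \<Rightarrow> real) \<Rightarrow> (real \<Rightarrow> real) \<Rightarrow> real" where
  "Qvc g rho B \<psi> d dd = \<bar>B\<bar>\<^sup>2 * L2sq dd / Dvc g rho B \<psi> d"

definition Qhc :: "real \<Rightarrow> real \<Rightarrow> real \<Rightarrow> (real \<Rightarrow> real) \<Rightarrow> (real \<Rightarrow> real) \<Rightarrow> real" where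
  "Qhc g rho B \<psi> d = Dvc g rho B \<psi> d / (\<bar>B\<bar>\<^sup>2 * L2sq \<psi>)"

definition Bc2 :: "real \<Rightarrow> real \<Rightarrow> real" where
  "Bc2 g rho = Sup {Qc g rho \<psi> d | \<psi> d. (\<psi>, d) \<in> H01 \<and> nonzero \<psi>}"

definition Bc :: "real \<Rightarrow> real \<Rightarrow> real" where
  "Bc g rho = sqrt (Bc2 g rho)"

definition xi_vc2 :: "real \<Rightarrow> real \<Rightarrow> real \<Rightarrow> real" where
  "xi_vc2 g rho B = Inf {Qvc g rho B \<psi> d dd | \<psi> d dd. (\<psi>, d, dd) \<in> H02 \<and> Dvc g rho B \<psi> d > 0}"

definition xi_vc :: "real \<Rightarrow> real \<Rightarrow> real \<Rightarrow> real" where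
  "xi_vc g rho B = sqrt (xi_vc2 g rho B)"

definition xi_hc2 :: "real \<Rightarrow> real \<Rightarrow> real \<Rightarrow> real" where
  "xi_hc2 g rho B = Sup {Qhc g rho B \<psi> d | \<psi> d. (\<psi>, d) \<in> H01 \<and> nonzero \<psi>}"

definition xi_hc :: "real \<Rightarrow> real \<Rightarrow> real \<Rightarrow> real" where
  "xi_hc g rho B = sqrt (xi_hc2 g rho B)"

end

theory Submission
  imports Defs
begin
lemma H01_int:
  assumes "(\<psi>, d) \<in> H01"
  shows "set_integrable lborel {-1..1} d"
proof -
  have m: "set_borel_measurable lborel {-1..1} d" and s: "set_integrable lborel {-1..1} (\<lambda>x. (d x)\<^sup>2)"
    using assms by (auto simp: H01_def)
  have c: "set_integrable lborel {-1..1::real} (\<lambda>x. 1::real)"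
    using borel_integrable_atLeastAtMost'[of "-1::real" 1 "\<lambda>x. 1::real"] by simp
  have "set_integrable lborel {-1..1} (\<lambda>x. 1 + (d x)\<^sup>2)"
    using set_integral_add(1)[OF c s] by simp
  then show ?thesis
  proof (rule set_integrable_bound[OF _ m])
    show "AE x in lborel. x \<in> {-1..1} \<longrightarrow> norm (d x) \<le> norm (1 + (d x)\<^sup>2)"
    proof (intro always_eventually allI impI)
      fix x
      have "0 \<le> (\<bar>d x\<bar> - 1)\<^sup>2" by simp
      then have "2 * \<bar>d x\<bar> \<le> (d x)\<^sup>2 + 1" by (simp add: power2_eq_square algebra_simps abs_mult_self_eq)
      moreover have "0 \<le> (d x)\<^sup>2" by simp
      ultimately show "norm (d x) \<le> norm (1 + (d x)\<^sup>2)" by simp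
    qed
  qed
qed

lemma H01_int_sub:
  assumes "(\<psi>, d) \<in> H01" "-1 \<le> a" "b \<le> 1"
  shows "set_integrable lborel {a..b} d"
  by (rule set_integrable_subset[OF H01_int[OF assms(1)]]) (use assms in auto)

lemma H01_int_sq_sub:
  assumes "(\<psi>, d) \<in> H01" "-1 \<le> a" "b \<le> 1"
  shows "set_integrable lborel {a..b} (\<lambda>x. (d x)\<^sup>2)"
  by (rule set_integrable_subset[of _ "{-1..1}"]) (use assms in \<open>auto simp: H01_def\<close>)

lemma LINT_Icc_Ioc:
  fixes a b :: real and f :: "real \<Rightarrow> real"
  assumes "a \<le> b"
  shows "(LINT x:{a<..b}|lborel. f x) = (LINT x:{a..b}|lborel. f x)"
  using interval_integral_Ioc[of a b f] interval_integral_Icc[of a b f] assms by simp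

lemma psi_split:
  assumes "(\<psi>, d) \<in> H01" "-1 \<le> a" "a \<le> x" "x \<le> 1"
  shows "\<psi> x = \<psi> a + (LINT t:{a..x}|lborel. d t)"
proof -
  have px: "\<psi> x = (LINT t:{-1..x}|lborel. d t)" and pa: "\<psi> a = (LINT t:{-1..a}|lborel. d t)"
    using assms by (auto simp: H01_def)
  have "{-1..x} = {-1..a} \<union> {a<..x}" using assms by auto
  moreover have "set_integrable lborel {-1..a} d"
    by (rule set_integrable_subset[OF H01_int[OF assms(1)]]) (use assms in auto)
  moreover have "set_integrable lborel {a<..x} d"
    by (rule set_integrable_subset[OF H01_int[OF assms(1)]]) (use assms in auto)
  moreover have "{-1..a} \<inter> {a<..x} = {}" by auto
  ultimately have "(LINT t:{-1..x}|lborel. d t) = (LINT t:{-1..a}|lborel. d t) + (LINT t:{a<..x}|lborel. d t)"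
    using set_integral_Un[of "{-1..a}" "{a<..x}" lborel d] by simp
  then show ?thesis using px pa LINT_Icc_Ioc[OF assms(3)] by simp
qed

lemma cont_bound:
  fixes g :: "real \<Rightarrow> real"
  assumes "continuous_on {a..b} g"
  shows "\<exists>M. \<forall>x\<in>{a..b}. \<bar>g x\<bar> \<le> M"
proof -
  have "bounded (g ` {a..b})"
    by (rule compact_imp_bounded[OF compact_continuous_image[OF assms compact_Icc]])
  then show ?thesis by (auto simp: bounded_real)
qed

lemma set_integrable_mult_cont:
  fixes f g :: "real \<Rightarrow> real"
  assumes f: "set_integrable lborel {a..b} f" and g: "continuous_on {a..b} g"
  shows "set_integrable lborel {a..b} (\<lambda>x. f x * g x)"
proof -
  obtain M where M: "\<forall>x\<in>{a..b}. \<bar>g x\<bar> \<le> M" using cont_bound[OF g] by blast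
  have mf: "(\<lambda>x. indicator {a..b} x *\<^sub>R f x) \<in> borel_measurable lborel"
    using f unfolding set_integrable_def by (rule borel_measurable_integrable)
  have mg: "(\<lambda>x. indicator {a..b} x *\<^sub>R g x) \<in> borel_measurable lborel"
    using borel_measurable_continuous_on_indicator[OF _ g] by simp
  have "(\<lambda>x. indicator {a..b} x *\<^sub>R (f x * g x)) = (\<lambda>x. (indicator {a..b} x *\<^sub>R f x) * (indicator {a..b} x *\<^sub>R g x))"
    by (auto simp: indicator_def fun_eq_iff)
  then have m: "set_borel_measurable lborel {a..b} (\<lambda>x. f x * g x)"
    unfolding set_borel_measurable_def using mf mg by simp
  have i: "set_integrable lborel {a..b} (\<lambda>x. M * \<bar>f x\<bar>)"
    using set_integrable_abs[OF f] by (rule set_integrable_mult_right)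
  show ?thesis
  proof (rule set_integrable_bound[OF i m])
    show "AE x in lborel. x \<in> {a..b} \<longrightarrow> norm (f x * g x) \<le> norm (M * \<bar>f x\<bar>)"
    proof (intro always_eventually allI impI)
      fix x assume x: "x \<in> {a..b}"
      have "\<bar>f x * g x\<bar> = \<bar>f x\<bar> * \<bar>g x\<bar>" by (simp add: abs_mult)
      also have "\<dots> \<le> \<bar>f x\<bar> * M" using M x by (simp add: mult_left_mono)
      also have "\<dots> \<le> \<bar>M * \<bar>f x\<bar>\<bar>" by (simp add: abs_mult mult.commute mult_right_mono)
      finally show "norm (f x * g x) \<le> norm (M * \<bar>f x\<bar>)" by simp
    qed
  qed
qed

lemma ind_int: "integrable lborel (indicat_real {a..b::real})"
  using borel_integrable_atLeastAtMost'[of a b "\<lambda>x. 1::real"] unfolding set_integrable_def by simp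

lemma ibp:
  fixes \<psi> d W w :: "real \<Rightarrow> real"
  assumes H: "(\<psi>, d) \<in> H01" and a: "-1 \<le> a" and ab: "a \<le> b" and b: "b \<le> 1"
    and W: "\<And>x. (W has_real_derivative w x) (at x)" and wc: "continuous_on UNIV w"
  shows "set_integrable lborel {a..b} (\<lambda>x. \<psi> x * w x)"
    and "(LINT x:{a..b}|lborel. \<psi> x * w x) = \<psi> b * W b - \<psi> a * W a - (LINT x:{a..b}|lborel. d x * W x)"
proof -
  define D where "D t = indicator {-1..1} t * d t" for t :: real
  have Dm[measurable]: "D \<in> borel_measurable lborel"
    using H unfolding H01_def set_borel_measurable_def D_def by auto
  have wm[measurable]: "w \<in> borel_measurable lborel"
    using borel_measurable_continuous_onI[OF wc] by simp
  have Wc: "continuous_on UNIV W"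
    using W by (meson DERIV_isCont continuous_at_imp_continuous_on)
  obtain M where M: "\<forall>x\<in>{a..b}. \<bar>w x\<bar> \<le> M"
    using cont_bound[OF continuous_on_subset[OF wc]] by blast
  have M0: "0 \<le> M" using M ab by force
  have dI: "set_integrable lborel {a..b} d" using H01_int_sub[OF H a b] .
  have DD: "D t = d t" if "t \<in> {a..b}" for t using that a b by (auto simp: D_def)
  define f where "f t x = (if a \<le> t \<and> t \<le> x \<and> x \<le> b then D t * w x else 0)" for t x :: real
  define G where "G t x = indicator {a..b} t * \<bar>D t\<bar> * (indicator {a..b} x * M)" for t x :: real
  have Dint: "integrable lborel (\<lambda>t. indicator {a..b} t * \<bar>D t\<bar>)"
  proof -
    have "integrable lborel (\<lambda>t. \<bar>indicator {a..b} t *\<^sub>R d t\<bar>)"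
      using dI unfolding set_integrable_def by (rule integrable_abs)
    moreover have "\<bar>indicator {a..b} t *\<^sub>R d t\<bar> = indicator {a..b} t * \<bar>D t\<bar>" for t
      using DD[of t] by (auto simp: indicator_def)
    ultimately show ?thesis by simp
  qed
  have intG: "(\<integral>x. norm (G t x) \<partial>lborel) = indicator {a..b} t * \<bar>D t\<bar> * (M * (b - a))" for t
  proof -
    have "(\<integral>x. norm (G t x) \<partial>lborel) = (\<integral>x. (indicator {a..b} t * \<bar>D t\<bar> * M) * indicator {a..b} x \<partial>lborel)"
      using M0 by (intro Bochner_Integration.integral_cong) (auto simp: G_def abs_mult)
    also have "\<dots> = indicator {a..b} t * \<bar>D t\<bar> * M * measure lborel {a..b}"
      by (simp del: measure_lborel_Icc)
    finally show ?thesis using ab by simp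
  qed
  have Gint: "integrable (lborel \<Otimes>\<^sub>M lborel) (\<lambda>(t, x). G t x)"
  proof (rule lborel_pair.Fubini_integrable)
    show "(\<lambda>(t, x). G t x) \<in> borel_measurable (lborel \<Otimes>\<^sub>M lborel)" unfolding G_def by measurable
    show "integrable lborel (\<lambda>t. \<integral>x. norm (case (t, x) of (t, x) \<Rightarrow> G t x) \<partial>lborel)"
      unfolding intG case_prod_conv using Dint by (intro integrable_mult_left)
    show "AE t in lborel. integrable lborel (\<lambda>x. case (t, x) of (t, x) \<Rightarrow> G t x)"
      unfolding G_def case_prod_conv
      by (intro always_eventually allI integrable_mult_right integrable_mult_left) (simp add: ind_int)
  qed
  have fint: "integrable (lborel \<Otimes>\<^sub>M lborel) (\<lambda>(t, x). f t x)"
  proof (rule Bochner_Integration.integrable_bound[OF Gint])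
    show "(\<lambda>(t, x). f t x) \<in> borel_measurable (lborel \<Otimes>\<^sub>M lborel)" unfolding f_def by measurable
    show "AE p in lborel \<Otimes>\<^sub>M lborel. norm (case p of (t, x) \<Rightarrow> f t x) \<le> norm (case p of (t, x) \<Rightarrow> G t x)"
    proof (intro always_eventually allI)
      fix p :: "real \<times> real"
      obtain t x where p: "p = (t, x)" by fastforce
      show "norm (case p of (t, x) \<Rightarrow> f t x) \<le> norm (case p of (t, x) \<Rightarrow> G t x)"
        using M M0 unfolding p f_def G_def
        by (auto simp: abs_mult intro!: mult_left_mono)
    qed
  qed
  have A: "(\<integral>t. f t x \<partial>lborel) = indicator {a..b} x * w x * (\<psi> x - \<psi> a)" for x
  proof (cases "x \<in> {a..b}")
    case True
    have "(\<integral>t. f t x \<partial>lborel) = (\<integral>t. (indicator {a..x} t *\<^sub>R d t) * w x \<partial>lborel)"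
      using True a b by (intro Bochner_Integration.integral_cong) (auto simp: f_def D_def indicator_def)
    also have "\<dots> = (LINT t:{a..x}|lborel. d t) * w x"
      by (simp add: set_lebesgue_integral_def)
    also have "\<dots> = (\<psi> x - \<psi> a) * w x"
      using psi_split[OF H a, of x] True b by auto
    finally show ?thesis using True by simp
  next
    case False
    then have "(\<lambda>t. f t x) = (\<lambda>t. 0)" by (auto simp: f_def fun_eq_iff)
    then show ?thesis using False by simp
  qed
  have B: "(\<integral>x. f t x \<partial>lborel) = indicator {a..b} t * d t * (W b - W t)" for t
  proof (cases "t \<in> {a..b}")
    case True
    have "(\<integral>x. f t x \<partial>lborel) = (\<integral>x. d t * (w x * indicator {t..b} x) \<partial>lborel)"
      using True DD[of t] by (intro Bochner_Integration.integral_cong) (auto simp: f_def indicator_def)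
    also have "\<dots> = d t * (W b - W t)"
      using True integral_FTC_Icc_real[of t b W w] W wc
      by (simp add: continuous_on_eq_continuous_at)
    finally show ?thesis using True by simp
  next
    case False
    then have "(\<lambda>x. f t x) = (\<lambda>x. 0)" by (auto simp: f_def fun_eq_iff)
    then show ?thesis using False by simp
  qed
  have I1: "integrable lborel (\<lambda>x. indicator {a..b} x * w x * (\<psi> x - \<psi> a))"
    using lborel_pair.integrable_snd[OF fint] unfolding A .
  have fub: "(\<integral>x. indicator {a..b} x * w x * (\<psi> x - \<psi> a) \<partial>lborel) = (\<integral>t. indicator {a..b} t * d t * (W b - W t) \<partial>lborel)"
    using lborel_pair.Fubini_integral[OF fint] unfolding A B .
  have wI: "integrable lborel (\<lambda>x. indicator {a..b} x * w x)"
    using borel_integrable_atLeastAtMost'[OF continuous_on_subset[OF wc]] unfolding set_integrable_def by simp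
  have eq1: "(\<lambda>x. indicator {a..b} x *\<^sub>R (\<psi> x * w x)) = (\<lambda>x. indicator {a..b} x * w x * (\<psi> x - \<psi> a) + \<psi> a * (indicator {a..b} x * w x))"
    by (auto simp: fun_eq_iff algebra_simps)
  show "set_integrable lborel {a..b} (\<lambda>x. \<psi> x * w x)"
    unfolding set_integrable_def eq1 using I1 integrable_mult_right[OF wI, of "\<psi> a"] by (rule Bochner_Integration.integrable_add)
  have dW: "set_integrable lborel {a..b} (\<lambda>x. d x * W x)"
    by (rule set_integrable_mult_cont[OF dI continuous_on_subset[OF Wc]]) simp
  have Wab: "(\<integral>x. indicator {a..b} x * w x \<partial>lborel) = W b - W a"
    using integral_FTC_Icc_real[of a b W w] W wc ab
    by (simp add: continuous_on_eq_continuous_at mult.commute)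
  have eq2: "(\<lambda>t. indicator {a..b} t * d t * (W b - W t)) = (\<lambda>t. W b * (indicator {a..b} t *\<^sub>R d t) - indicator {a..b} t *\<^sub>R (d t * W t))"
    by (auto simp: fun_eq_iff algebra_simps)
  have "(LINT x:{a..b}|lborel. \<psi> x * w x) = (\<integral>x. indicator {a..b} x * w x * (\<psi> x - \<psi> a) \<partial>lborel) + \<psi> a * (W b - W a)"
    unfolding set_lebesgue_integral_def eq1 Wab[symmetric]
    using I1 wI by (simp add: Bochner_Integration.integral_add)
  also have "\<dots> = W b * (LINT t:{a..b}|lborel. d t) - (LINT x:{a..b}|lborel. d x * W x) + \<psi> a * (W b - W a)"
    unfolding fub eq2 set_lebesgue_integral_def using dI dW unfolding set_integrable_def
    by (simp add: Bochner_Integration.integral_diff)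
  also have "\<dots> = \<psi> b * W b - \<psi> a * W a - (LINT x:{a..b}|lborel. d x * W x)"
    using psi_split[OF H a ab b] by (simp add: algebra_simps)
  finally show "(LINT x:{a..b}|lborel. \<psi> x * w x) = \<psi> b * W b - \<psi> a * W a - (LINT x:{a..b}|lborel. d x * W x)" .
qed

lemma psi_cont:
  assumes H: "(\<psi>, d) \<in> H01"
  shows "continuous_on {-1..1} \<psi>"
proof -
  have di: "d integrable_on {-1..1}"
    using set_borel_integral_eq_integral(1)[OF H01_int[OF H]] .
  have "\<psi> x = integral {-1..x} d" if "x \<in> {-1..1}" for x
  proof -
    have "set_integrable lborel {-1..x} d"
      using H01_int_sub[OF H, of "-1" x] that by auto
    then show ?thesis using set_borel_integral_eq_integral(2) H that by (auto simp: H01_def)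
  qed
  then show ?thesis
    using indefinite_integral_continuous_1[OF di] by (metis (no_types, lifting) continuous_on_cong)
qed

lemma FTC_set:
  fixes F f :: "real \<Rightarrow> real"
  assumes "a \<le> b" "\<And>x. (F has_real_derivative f x) (at x)" "\<And>x. isCont f x"
  shows "(LINT x:{a..b}|lborel. f x) = F b - F a"
  using integral_FTC_Icc_real[of a b F f] assms
  unfolding set_lebesgue_integral_def by (simp add: mult.commute)

lemma set_integrable_cont:
  fixes f :: "real \<Rightarrow> real"
  assumes "\<And>x. isCont f x"
  shows "set_integrable lborel {a..b} f"
  by (rule borel_integrable_atLeastAtMost') (simp add: assms continuous_at_imp_continuous_on)

lemma set_integrable_cong':
  fixes f g :: "real \<Rightarrow> real"
  assumes "set_integrable M A f" "\<And>x. x \<in> A \<Longrightarrow> f x = g x"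
  shows "set_integrable M A g"
proof -
  have "(\<lambda>x. indicator A x *\<^sub>R f x) = (\<lambda>x. indicator A x *\<^sub>R g x)"
    using assms(2) by (auto simp: fun_eq_iff indicator_def)
  then show ?thesis using assms(1) unfolding set_integrable_def by simp
qed

lemma split_int:
  fixes f :: "real \<Rightarrow> real"
  assumes "set_integrable lborel {a..b} f" "a \<le> c" "c \<le> b"
  shows "(LINT x:{a..b}|lborel. f x) = (LINT x:{a..c}|lborel. f x) + (LINT x:{c..b}|lborel. f x)"
proof -
  have "{a..b} = {a..c} \<union> {c<..b}" using assms by auto
  moreover have "set_integrable lborel {a..c} f"
    by (rule set_integrable_subset[OF assms(1)]) (use assms in auto)
  moreover have "set_integrable lborel {c<..b} f"
    by (rule set_integrable_subset[OF assms(1)]) (use assms in auto)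
  moreover have "{a..c} \<inter> {c<..b} = {}" by auto
  ultimately show ?thesis
    using set_integral_Un[of "{a..c}" "{c<..b}" lborel f] LINT_Icc_Ioc[OF assms(3), of f] by simp
qed

lemma amgm2:
  fixes f1 g1 f2 g2 :: "real \<Rightarrow> real"
  assumes a: "\<alpha> > 0"
    and i1: "set_integrable lborel A (\<lambda>x. f1 x * g1 x + f2 x * g2 x)"
    and i2: "set_integrable lborel A (\<lambda>x. (f1 x)\<^sup>2 + (f2 x)\<^sup>2)"
    and i3: "set_integrable lborel A (\<lambda>x. (g1 x)\<^sup>2 + (g2 x)\<^sup>2)"
  shows "2 * (LINT x:A|lborel. f1 x * g1 x + f2 x * g2 x) \<le> \<alpha> * (LINT x:A|lborel. (f1 x)\<^sup>2 + (f2 x)\<^sup>2) + (LINT x:A|lborel. (g1 x)\<^sup>2 + (g2 x)\<^sup>2) / \<alpha>"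
proof -
  have pt: "2 * (f1 x * g1 x + f2 x * g2 x) \<le> \<alpha> * ((f1 x)\<^sup>2 + (f2 x)\<^sup>2) + ((g1 x)\<^sup>2 + (g2 x)\<^sup>2) / \<alpha>" for x
  proof -
    have "0 \<le> ((\<alpha> * f1 x - g1 x)\<^sup>2 + (\<alpha> * f2 x - g2 x)\<^sup>2) / \<alpha>" using a by simp
    also have "((\<alpha> * f1 x - g1 x)\<^sup>2 + (\<alpha> * f2 x - g2 x)\<^sup>2) / \<alpha> = \<alpha> * ((f1 x)\<^sup>2 + (f2 x)\<^sup>2) + ((g1 x)\<^sup>2 + (g2 x)\<^sup>2) / \<alpha> - 2 * (f1 x * g1 x + f2 x * g2 x)"
      using a by (simp add: power2_eq_square field_simps)
    finally show ?thesis by simp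
  qed
  have j: "set_integrable lborel A (\<lambda>x. \<alpha> * ((f1 x)\<^sup>2 + (f2 x)\<^sup>2) + ((g1 x)\<^sup>2 + (g2 x)\<^sup>2) / \<alpha>)"
    using i2 i3 by auto
  have "(LINT x:A|lborel. 2 * (f1 x * g1 x + f2 x * g2 x)) \<le> (LINT x:A|lborel. \<alpha> * ((f1 x)\<^sup>2 + (f2 x)\<^sup>2) + ((g1 x)\<^sup>2 + (g2 x)\<^sup>2) / \<alpha>)"
    by (rule set_integral_mono[OF set_integrable_mult_right[OF i1] j]) (rule pt)
  moreover have "(LINT x:A|lborel. 2 * (f1 x * g1 x + f2 x * g2 x)) = 2 * (LINT x:A|lborel. f1 x * g1 x + f2 x * g2 x)"
    by (rule set_integral_mult_right)
  moreover have "(LINT x:A|lborel. \<alpha> * ((f1 x)\<^sup>2 + (f2 x)\<^sup>2) + ((g1 x)\<^sup>2 + (g2 x)\<^sup>2) / \<alpha>) = \<alpha> * (LINT x:A|lborel. (f1 x)\<^sup>2 + (f2 x)\<^sup>2) + (LINT x:A|lborel. (g1 x)\<^sup>2 + (g2 x)\<^sup>2) / \<alpha>"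
    using set_integral_add(2)[OF set_integrable_mult_right[OF i2] set_integrable_divide[OF i3]]
    by (simp only: set_integral_mult_right set_integral_divide_zero)
  ultimately show ?thesis by simp
qed

lemma amgm2_eq:
  fixes f1 g1 f2 g2 :: "real \<Rightarrow> real"
  assumes a: "\<alpha> > 0"
    and i1: "set_integrable lborel A (\<lambda>x. f1 x * g1 x + f2 x * g2 x)"
    and i2: "set_integrable lborel A (\<lambda>x. (f1 x)\<^sup>2 + (f2 x)\<^sup>2)"
    and i3: "set_integrable lborel A (\<lambda>x. (g1 x)\<^sup>2 + (g2 x)\<^sup>2)"
    and eq1: "\<And>x. x \<in> A \<Longrightarrow> x \<noteq> c \<Longrightarrow> \<alpha> * f1 x = g1 x"
    and eq2: "\<And>x. x \<in> A \<Longrightarrow> x \<noteq> c \<Longrightarrow> \<alpha> * f2 x = g2 x"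
  shows "2 * (LINT x:A|lborel. f1 x * g1 x + f2 x * g2 x) = \<alpha> * (LINT x:A|lborel. (f1 x)\<^sup>2 + (f2 x)\<^sup>2) + (LINT x:A|lborel. (g1 x)\<^sup>2 + (g2 x)\<^sup>2) / \<alpha>"
proof -
  define h where "h x = \<alpha> * ((f1 x)\<^sup>2 + (f2 x)\<^sup>2) + ((g1 x)\<^sup>2 + (g2 x)\<^sup>2) / \<alpha> - 2 * (f1 x * g1 x + f2 x * g2 x)" for x
  have j: "set_integrable lborel A (\<lambda>x. \<alpha> * ((f1 x)\<^sup>2 + (f2 x)\<^sup>2) + ((g1 x)\<^sup>2 + (g2 x)\<^sup>2) / \<alpha>)"
    using i2 i3 by auto
  have hi: "set_integrable lborel A h"
    unfolding h_def by (rule set_integral_diff(1)[OF j set_integrable_mult_right[OF i1]])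
  have "(LINT x:A|lborel. h x) = (LINT x:A|lborel. 0)"
    unfolding set_lebesgue_integral_def
  proof (rule integral_cong_AE)
    show "(\<lambda>x. indicat_real A x *\<^sub>R h x) \<in> borel_measurable lborel"
      using hi unfolding set_integrable_def by (rule borel_measurable_integrable)
    show "(\<lambda>x. indicat_real A x *\<^sub>R (0::real)) \<in> borel_measurable lborel" by simp
    show "AE x in lborel. indicat_real A x *\<^sub>R h x = indicat_real A x *\<^sub>R (0::real)"
      using AE_lborel_singleton[of c]
    proof eventually_elim
      case (elim x)
      show ?case
      proof (cases "x \<in> A")
        case True
        then have g1: "g1 x = \<alpha> * f1 x" and g2: "g2 x = \<alpha> * f2 x" using eq1 eq2 elim by auto
        have "h x = 0"
          unfolding h_def g1 g2 using a by (simp add: power2_eq_square field_simps)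
        then show ?thesis by simp
      qed simp
    qed
  qed
  then have "(LINT x:A|lborel. h x) = 0" by simp
  then have "(LINT x:A|lborel. \<alpha> * ((f1 x)\<^sup>2 + (f2 x)\<^sup>2) + ((g1 x)\<^sup>2 + (g2 x)\<^sup>2) / \<alpha>) - (LINT x:A|lborel. 2 * (f1 x * g1 x + f2 x * g2 x)) = 0"
    unfolding h_def using set_integral_diff(2)[OF j set_integrable_mult_right[OF i1]] by (simp only:)
  moreover have "(LINT x:A|lborel. 2 * (f1 x * g1 x + f2 x * g2 x)) = 2 * (LINT x:A|lborel. f1 x * g1 x + f2 x * g2 x)"
    by (rule set_integral_mult_right)
  moreover have "(LINT x:A|lborel. \<alpha> * ((f1 x)\<^sup>2 + (f2 x)\<^sup>2) + ((g1 x)\<^sup>2 + (g2 x)\<^sup>2) / \<alpha>) = \<alpha> * (LINT x:A|lborel. (f1 x)\<^sup>2 + (f2 x)\<^sup>2) + (LINT x:A|lborel. (g1 x)\<^sup>2 + (g2 x)\<^sup>2) / \<alpha>"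
    using set_integral_add(2)[OF set_integrable_mult_right[OF i2] set_integrable_divide[OF i3]]
    by (simp only: set_integral_mult_right set_integral_divide_zero)
  ultimately show ?thesis by linarith
qed

lemma H01_piece:
  fixes pL pR dL dR :: "real \<Rightarrow> real"
  assumes pL: "\<And>x. (pL has_real_derivative dL x) (at x)" and pR: "\<And>x. (pR has_real_derivative dR x) (at x)"
    and cL: "\<And>x. isCont dL x" and cR: "\<And>x. isCont dR x"
    and e1: "pL (-1) = 0" and e2: "pR 1 = 0" and e0: "pL 0 = pR 0"
  shows "((\<lambda>x. if x \<le> 0 then pL x else pR x), (\<lambda>x. if x \<le> 0 then dL x else dR x)) \<in> H01"
proof -
  define d where "d x = (if x \<le> 0 then dL x else dR x)" for x :: real
  have mL[measurable]: "dL \<in> borel_measurable borel"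
    by (rule borel_measurable_continuous_onI) (simp add: cL continuous_at_imp_continuous_on)
  have mR[measurable]: "dR \<in> borel_measurable borel"
    by (rule borel_measurable_continuous_onI) (simp add: cR continuous_at_imp_continuous_on)
  have dm[measurable]: "d \<in> borel_measurable borel" unfolding d_def by measurable
  have m: "set_borel_measurable lborel {-1..1} d"
    unfolding set_borel_measurable_def by measurable
  have iL: "set_integrable lborel {-1..0} (\<lambda>x. (d x)\<^sup>2)"
    by (rule set_integrable_cong'[OF set_integrable_cont[of "\<lambda>x. (dL x)\<^sup>2"]])
       (auto simp: d_def intro!: continuous_intros cL)
  have iR0: "set_integrable lborel {0..1} (\<lambda>x. (dR x)\<^sup>2)"
    by (rule set_integrable_cont) (auto intro!: continuous_intros cR)
  have iR: "set_integrable lborel {0<..1} (\<lambda>x. (d x)\<^sup>2)"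
    by (rule set_integrable_cong'[OF set_integrable_subset[OF iR0]]) (auto simp: d_def)
  have "{-1..1} = {-1..0} \<union> {0<..(1::real)}" by auto
  then have sq: "set_integrable lborel {-1..1} (\<lambda>x. (d x)\<^sup>2)"
    using set_integrable_Un[OF iL iR] by simp
  have intL: "(LINT t:{a..b}|lborel. d t) = pL b - pL a" if "a \<le> b" "b \<le> 0" for a b
  proof -
    have "(LINT t:{a..b}|lborel. d t) = (LINT t:{a..b}|lborel. dL t)"
      by (rule set_lebesgue_integral_cong) (use that in \<open>auto simp: d_def\<close>)
    also have "\<dots> = pL b - pL a" by (rule FTC_set[OF that(1) pL cL])
    finally show ?thesis .
  qed
  have eq: "(if x \<le> 0 then pL x else pR x) = (LINT t:{-1..x}|lborel. d t)" if x: "x \<in> {-1..1}" for x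
  proof (cases "x \<le> 0")
    case True
    then show ?thesis using intL[of "-1" x] x e1 by auto
  next
    case False
    have "{-1..x} = {-1..0} \<union> {0<..x}" using False x by auto
    moreover have "set_integrable lborel {-1..0} d"
      by (rule set_integrable_cong'[OF set_integrable_cont[of dL]]) (auto simp: d_def cL)
    moreover have "set_integrable lborel {0<..x} d"
      by (rule set_integrable_cong'[OF set_integrable_subset[OF set_integrable_cont[of dR 0 x]]])
         (auto simp: d_def cR)
    moreover have "{-1..0} \<inter> {0<..x} = {}" by auto
    ultimately have "(LINT t:{-1..x}|lborel. d t) = (LINT t:{-1..0}|lborel. d t) + (LINT t:{0<..x}|lborel. d t)"
      using set_integral_Un[of "{-1..0}" "{0<..x}" lborel d] by simp
    also have "(LINT t:{0<..x}|lborel. d t) = (LINT t:{0<..x}|lborel. dR t)"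
      by (rule set_lebesgue_integral_cong) (auto simp: d_def)
    also have "\<dots> = (LINT t:{0..x}|lborel. dR t)" using LINT_Icc_Ioc[of 0 x dR] False by simp
    also have "\<dots> = pR x - pR 0" using FTC_set[of 0 x pR dR] False pR cR by simp
    finally show ?thesis using intL[of "-1" 0] e1 e0 False by simp
  qed
  show ?thesis unfolding H01_def using m sq eq e2 unfolding d_def by auto
qed

lemma LINT_piece:
  fixes hL hR :: "real \<Rightarrow> real"
  assumes cL: "\<And>x. isCont hL x" and cR: "\<And>x. isCont hR x"
  shows "set_integrable lborel {-1..1} (\<lambda>x. if x \<le> 0 then hL x else hR x)"
    and "(LINT x:{-1..1}|lborel. (if x \<le> 0 then hL x else hR x)) = (LINT x:{-1..0}|lborel. hL x) + (LINT x:{0..1}|lborel. hR x)"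
proof -
  define h where "h x = (if x \<le> 0 then hL x else hR x)" for x :: real
  have iL: "set_integrable lborel {-1..0} h"
    by (rule set_integrable_cong'[OF set_integrable_cont[of hL]]) (auto simp: h_def cL)
  have iR: "set_integrable lborel {0<..1} h"
    by (rule set_integrable_cong'[OF set_integrable_subset[OF set_integrable_cont[of hR 0 1]]])
       (auto simp: h_def cR)
  have U: "{-1..1} = {-1..0} \<union> {0<..(1::real)}" by auto
  show "set_integrable lborel {-1..1} (\<lambda>x. if x \<le> 0 then hL x else hR x)"
    using set_integrable_Un[OF iL iR] U unfolding h_def by simp
  have D: "{-1..0} \<inter> {0<..(1::real)} = {}" by auto
  have "(LINT x:{-1..1}|lborel. h x) = (LINT x:{-1..0}|lborel. h x) + (LINT x:{0<..1}|lborel. h x)"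
    using set_integral_Un[OF D iL iR] U by simp
  also have "(LINT x:{-1..0}|lborel. h x) = (LINT x:{-1..0}|lborel. hL x)"
    by (rule set_lebesgue_integral_cong) (auto simp: h_def)
  also have "(LINT x:{0<..1}|lborel. h x) = (LINT x:{0<..1}|lborel. hR x)"
    by (rule set_lebesgue_integral_cong) (auto simp: h_def)
  also have "\<dots> = (LINT x:{0..1}|lborel. hR x)" using LINT_Icc_Ioc[of 0 1 hR] by simp
  finally show "(LINT x:{-1..1}|lborel. (if x \<le> 0 then hL x else hR x)) = (LINT x:{-1..0}|lborel. hL x) + (LINT x:{0..1}|lborel. hR x)"
    unfolding h_def .
qed

lemma sinh_gt: fixes z :: real assumes "0 < z" shows "z < sinh z"
proof -
  have der: "\<And>x. DERIV sinh x :> cosh (x::real)" by (auto intro!: derivative_eq_intros)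
  obtain t where t: "0 < t" "t < z" "sinh z - sinh 0 = (z - 0) * cosh t"
    using MVT2[of 0 z sinh cosh, OF assms der] by blast
  have "cosh t > 1" using cosh_real_ge_1[of t] cosh_real_one_iff[of t] t(1) by linarith
  then have "z * 1 < z * cosh t" using assms by (intro mult_strict_left_mono) auto
  then show ?thesis using t by simp
qed

lemma tanh_lt: fixes y :: real assumes "0 < y" shows "tanh y < y"
proof -
  have der: "\<And>x. DERIV tanh x :> 1 - (tanh (x::real))\<^sup>2" by (auto intro!: derivative_eq_intros)
  obtain t where t: "0 < t" "t < y" "tanh y - tanh 0 = (y - 0) * (1 - (tanh t)\<^sup>2)"
    using MVT2[of 0 y tanh "\<lambda>t. 1 - (tanh t)\<^sup>2", OF assms der] by blast
  have "tanh t > 0" using t by simp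
  then have "y * (1 - (tanh t)\<^sup>2) < y * 1" using assms by (intro mult_strict_left_mono) auto
  then show ?thesis using t by simp
qed

definition Tf :: "real \<Rightarrow> real" where "Tf y = tanh y / y"

lemma Tf_pos: "0 < y \<Longrightarrow> 0 < Tf y" by (simp add: Tf_def)
lemma Tf_lt1: "0 < y \<Longrightarrow> Tf y < 1" by (simp add: Tf_def tanh_lt)

lemma Tf_cont: "y \<noteq> 0 \<Longrightarrow> isCont Tf y"
  unfolding Tf_def by (intro continuous_intros) (auto simp: tanh_def)

lemma Tf_deriv: "y \<noteq> 0 \<Longrightarrow> (Tf has_real_derivative ((1 - (tanh y)\<^sup>2) * y - tanh y) / y\<^sup>2) (at y)"
  unfolding Tf_def by (auto intro!: derivative_eq_intros simp: power2_eq_square field_simps)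

lemma Tf_deriv_neg:
  fixes y :: real
  assumes "0 < y" shows "((1 - (tanh y)\<^sup>2) * y - tanh y) / y\<^sup>2 < 0"
proof -
  have c: "cosh y > 0" by simp
  have "2 * y < sinh (2 * y)" using sinh_gt[of "2*y"] assms by simp
  then have "y < sinh y * cosh y" by (simp add: sinh_double)
  then have "y / (cosh y)\<^sup>2 < sinh y / cosh y"
    using c by (simp add: power2_eq_square field_simps)
  moreover have "1 - (tanh y)\<^sup>2 = ((cosh y)\<^sup>2 - (sinh y)\<^sup>2) / (cosh y)\<^sup>2"
    using c by (simp add: tanh_def power_divide field_simps)
  moreover have "(cosh y)\<^sup>2 - (sinh y)\<^sup>2 = 1" using cosh_square_eq[of y] by simp
  ultimately have "(1 - (tanh y)\<^sup>2) * y - tanh y < 0" by (simp add: tanh_def)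
  then show ?thesis using assms by (simp add: divide_neg_pos)
qed

lemma Tf_strict: assumes "0 < x" "x < y" shows "Tf y < Tf x"
proof (rule DERIV_neg_imp_decreasing_open[OF assms(2)])
  fix t assume "x < t" "t < y"
  then show "\<exists>z. DERIV Tf t :> z \<and> z < 0"
    using Tf_deriv Tf_deriv_neg assms by (metis less_trans not_less_iff_gr_or_eq)
next
  show "continuous_on {x..y} Tf" using assms
    by (intro continuous_at_imp_continuous_on ballI Tf_cont) auto
qed

lemma Tf_lim0: "(Tf \<longlongrightarrow> 1) (at_right 0)"
proof -
  have "(tanh has_real_derivative 1 - (tanh 0)\<^sup>2) (at (0::real))"
    by (auto intro!: derivative_eq_intros)
  then have "((\<lambda>y. (tanh y - tanh 0) / (y - 0)) \<longlongrightarrow> 1) (at (0::real))"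
    by (simp add: has_field_derivative_iff)
  then have "(Tf \<longlongrightarrow> 1) (at 0)" by (simp add: Tf_def[abs_def])
  then show ?thesis by (simp add: filterlim_at_split)
qed

lemma Tf_limtop: "(Tf \<longlongrightarrow> 0) at_top"
proof (rule Lim_null_comparison)
  show "\<forall>\<^sub>F x in at_top. norm (Tf x) \<le> 1 / x"
    using eventually_gt_at_top[of "0::real"]
  proof eventually_elim
    case (elim x)
    have "\<bar>tanh x\<bar> \<le> 1" using tanh_real_bounds[of x] by auto
    then show ?case using elim by (simp add: Tf_def abs_div divide_right_mono)
  qed
  show "((\<lambda>x::real. 1 / x) \<longlongrightarrow> 0) at_top"
    using tendsto_inverse_0_at_top[OF filterlim_ident] by (simp add: inverse_eq_divide)
qed

lemma Tf_surj:
  assumes "0 < r" "r < 1" shows "\<exists>y>0. Tf y = r"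
proof -
  have "\<forall>\<^sub>F y in at_right 0. r < Tf y"
    using order_tendstoD(1)[OF Tf_lim0 assms(2)] .
  then obtain a where a: "a > 0" "\<forall>y>0. y < a \<longrightarrow> r < Tf y"
    by (auto simp: eventually_at_right_field)
  have a2: "r < Tf (a/2)" using a by auto
  have "\<forall>\<^sub>F y in at_top. Tf y < r"
    using order_tendstoD(2)[OF Tf_limtop assms(1)] .
  then obtain b where b: "\<forall>y\<ge>b. Tf y < r" by (auto simp: eventually_at_top_linorder)
  define c where "c = max b a"
  have c: "Tf c < r" "a/2 \<le> c" using b a by (auto simp: c_def)
  obtain y where "a/2 \<le> y" "y \<le> c" "Tf y = r"
    using IVT2[of Tf c r "a/2"] c a2 a Tf_cont by fastforce
  then show ?thesis using a by (intro exI[of _ y]) auto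
qed

definition Tinv :: "real \<Rightarrow> real" where "Tinv r = (THE y. 0 < y \<and> Tf y = r)"

lemma Tf_inj: "0 < x \<Longrightarrow> 0 < y \<Longrightarrow> Tf x = Tf y \<Longrightarrow> x = y"
  using Tf_strict by (metis less_irrefl linorder_neqE_linordered_idom)

lemma Tinv: assumes "0 < r" "r < 1" shows "0 < Tinv r" "Tf (Tinv r) = r"
proof -
  obtain y where y: "0 < y" "Tf y = r" using Tf_surj assms by blast
  have "0 < Tinv r \<and> Tf (Tinv r) = r"
    unfolding Tinv_def by (rule theI[of _ y]) (use y Tf_inj in auto)
  then show "0 < Tinv r" "Tf (Tinv r) = r" by auto
qed

lemma Tinv_Tf: "0 < y \<Longrightarrow> Tinv (Tf y) = y"
  using Tinv[of "Tf y"] Tf_pos Tf_lt1 Tf_inj by blast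

lemma Tinv_strict: assumes "0 < r1" "r1 < r2" "r2 < 1" shows "Tinv r2 < Tinv r1"
proof (rule ccontr)
  assume "\<not> Tinv r2 < Tinv r1"
  then have "Tinv r1 \<le> Tinv r2" by simp
  then have "Tf (Tinv r2) \<le> Tf (Tinv r1)"
    using Tf_strict[of "Tinv r1" "Tinv r2"] Tinv[of r1] assms by (cases "Tinv r1 = Tinv r2") auto
  then show False using Tinv[of r1] Tinv[of r2] assms by auto
qed

lemma Tinv_cont: assumes "0 < r" "r < 1" shows "isCont Tinv r"
proof -
  define x where "x = Tinv r"
  have x: "0 < x" "Tf x = r" using Tinv[OF assms] by (auto simp: x_def)
  have "isCont Tinv (Tf x)"
  proof (rule isCont_inverse_function[where d="x/2" and f=Tf and g=Tinv and x=x])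
    show "0 < x/2" using x by simp
    fix z assume "\<bar>z - x\<bar> \<le> x/2"
    then have "0 < z" using x(1) by (auto simp: abs_if split: if_splits)
    then show "Tinv (Tf z) = z" by (auto simp: Tinv_Tf)
  next
    fix z assume "\<bar>z - x\<bar> \<le> x/2"
    then have "0 < z" using x(1) by (auto simp: abs_if split: if_splits)
    then show "isCont Tf z" by (auto simp: Tf_cont)
  qed
  then show ?thesis using x by simp
qed

lemma psi_m1: assumes "(\<psi>, d) \<in> H01" shows "\<psi> (-1) = 0"
proof -
  have "\<psi> (-1) = (LINT t:{-1..-1}|lborel. d t)" using assms by (auto simp: H01_def)
  also have "\<dots> = (LINT t:{-1<..-1}|lborel. d t)" using LINT_Icc_Ioc[of "-1" "-1" d] by simp
  also have "\<dots> = 0" by (simp add: set_lebesgue_integral_def)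
  finally show ?thesis .
qed

lemma psi1: assumes "(\<psi>, d) \<in> H01" shows "\<psi> 1 = 0"
  using assms by (auto simp: H01_def)

lemma psi0_left: assumes "(\<psi>, d) \<in> H01" shows "(LINT t:{-1..0}|lborel. d t) = \<psi> 0"
  using assms by (auto simp: H01_def)

lemma psi0_right: assumes "(\<psi>, d) \<in> H01" shows "(LINT t:{0..1}|lborel. d t) = - \<psi> 0"
  using psi_split[OF assms, of 0 1] psi1[OF assms] by simp

lemma psi_sq_int:
  assumes "(\<psi>, d) \<in> H01" "-1 \<le> a" "b \<le> 1"
  shows "set_integrable lborel {a..b} (\<lambda>x. (\<psi> x)\<^sup>2)"
proof (rule borel_integrable_atLeastAtMost')
  have "continuous_on {a..b} \<psi>"
    by (rule continuous_on_subset[OF psi_cont[OF assms(1)]]) (use assms in auto)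
  then show "continuous_on {a..b} (\<lambda>x. (\<psi> x)\<^sup>2)" by (intro continuous_intros)
qed

lemma L2sq_split:
  assumes "set_integrable lborel {-1..1} (\<lambda>x. (f x)\<^sup>2)"
  shows "L2sq f = (LINT x:{-1..0}|lborel. (f x)\<^sup>2) + (LINT x:{0..1}|lborel. (f x)\<^sup>2)"
  unfolding L2sq_def using split_int[OF assms, of 0] by simp

lemma sq_int_H01: "(\<psi>, d) \<in> H01 \<Longrightarrow> set_integrable lborel {-1..1} (\<lambda>x. (d x)\<^sup>2)"
  by (auto simp: H01_def)

lemma L2sq_nonneg_part:
  fixes f :: "real \<Rightarrow> real"
  shows "0 \<le> (LINT x:A|lborel. (f x)\<^sup>2)"
  unfolding set_lebesgue_integral_def by (rule integral_nonneg_AE) (auto simp: indicator_def)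

lemma ineq_i:
  assumes H: "(\<psi>, d) \<in> H01"
  shows "2 * (\<psi> 0)\<^sup>2 \<le> L2sq d"
proof -
  define c where "c = \<psi> 0"
  have R: "c\<^sup>2 \<le> (LINT x:{0..1}|lborel. (d x)\<^sup>2)"
  proof -
    have i1: "set_integrable lborel {0..1} (\<lambda>x. d x * (- c) + 0 * 0)"
      using set_integrable_mult_left[of "-c" lborel "{0..1}" d] H01_int_sub[OF H, of 0 1] by simp
    have i2: "set_integrable lborel {0..1} (\<lambda>x. (d x)\<^sup>2 + 0\<^sup>2)"
      using H01_int_sq_sub[OF H, of 0 1] by simp
    have i3: "set_integrable lborel {0..1} (\<lambda>x::real. (- c)\<^sup>2 + (0::real)\<^sup>2)"
      by (rule set_integrable_cont) simp
    have "2 * (LINT x:{0..1}|lborel. d x * (- c) + 0 * 0) \<le> 1 * (LINT x:{0..1}|lborel. (d x)\<^sup>2 + 0\<^sup>2) + (LINT x:{0..1::real}|lborel. (- c)\<^sup>2 + (0::real)\<^sup>2) / 1"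
      using amgm2[OF _ i1 i2 i3, of 1] by simp
    moreover have "(LINT x:{0..1::real}|lborel. (- c)\<^sup>2 + (0::real)\<^sup>2) = c\<^sup>2"
      using FTC_set[of 0 1 "\<lambda>x. c\<^sup>2 * x" "\<lambda>x. (- c)\<^sup>2 + (0::real)\<^sup>2"]
      by (auto intro!: derivative_eq_intros)
    moreover have "(LINT x:{0..1}|lborel. d x * (- c) + 0 * 0) = c\<^sup>2"
      by (simp only: mult_zero_left add_0_right set_integral_mult_left psi0_right[OF H]) (simp add: c_def power2_eq_square)
    ultimately show ?thesis by simp
  qed
  have L: "c\<^sup>2 \<le> (LINT x:{-1..0}|lborel. (d x)\<^sup>2)"
  proof -
    have i1: "set_integrable lborel {-1..0} (\<lambda>x. d x * c + 0 * 0)"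
      using H01_int_sub[OF H, of "-1" 0] by simp
    have i2: "set_integrable lborel {-1..0} (\<lambda>x. (d x)\<^sup>2 + 0\<^sup>2)"
      using H01_int_sq_sub[OF H, of "-1" 0] by simp
    have i3: "set_integrable lborel {-1..0} (\<lambda>x::real. c\<^sup>2 + (0::real)\<^sup>2)"
      by (rule set_integrable_cont) simp
    have "2 * (LINT x:{-1..0}|lborel. d x * c + 0 * 0) \<le> 1 * (LINT x:{-1..0}|lborel. (d x)\<^sup>2 + 0\<^sup>2) + (LINT x:{-1..0::real}|lborel. c\<^sup>2 + (0::real)\<^sup>2) / 1"
      using amgm2[OF _ i1 i2 i3, of 1] by simp
    moreover have "(LINT x:{-1..0::real}|lborel. c\<^sup>2 + (0::real)\<^sup>2) = c\<^sup>2"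
      using FTC_set[of "-1" 0 "\<lambda>x. c\<^sup>2 * x" "\<lambda>x. c\<^sup>2 + (0::real)\<^sup>2"]
      by (auto intro!: derivative_eq_intros)
    moreover have "(LINT x:{-1..0}|lborel. d x * c + 0 * 0) = c\<^sup>2"
      by (simp only: mult_zero_left add_0_right set_integral_mult_left psi0_left[OF H]) (simp add: c_def power2_eq_square)
    ultimately show ?thesis by simp
  qed
  show ?thesis using L R L2sq_split[OF sq_int_H01[OF H]] by (simp add: c_def)
qed

lemma half_iii_R:
  fixes \<psi> d :: "real \<Rightarrow> real"
  assumes H: "(\<psi>, d) \<in> H01" and k: "0 < k"
  shows "set_integrable lborel {0..1} (\<lambda>x. d x * (- \<psi> 0 * cosh (k*(1-x))) + k * \<psi> x * (\<psi> 0 * sinh (k*(1-x))))"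
    and "(LINT x:{0..1}|lborel. d x * (- \<psi> 0 * cosh (k*(1-x))) + k * \<psi> x * (\<psi> 0 * sinh (k*(1-x)))) = (\<psi> 0)\<^sup>2 * cosh k"
    and "set_integrable lborel {0..1} (\<lambda>x. (d x)\<^sup>2 + (k * \<psi> x)\<^sup>2)"
    and "(LINT x:{0..1}|lborel. (d x)\<^sup>2 + (k * \<psi> x)\<^sup>2) = (LINT x:{0..1}|lborel. (d x)\<^sup>2) + k\<^sup>2 * (LINT x:{0..1}|lborel. (\<psi> x)\<^sup>2)"
    and "set_integrable lborel {0..1} (\<lambda>x. (- \<psi> 0 * cosh (k*(1-x)))\<^sup>2 + (\<psi> 0 * sinh (k*(1-x)))\<^sup>2)"
    and "(LINT x:{0..1}|lborel. (- \<psi> 0 * cosh (k*(1-x)))\<^sup>2 + (\<psi> 0 * sinh (k*(1-x)))\<^sup>2) = (\<psi> 0)\<^sup>2 * (sinh k * cosh k / k)"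
proof -
  define W where "W x = cosh (k*(1-x))" for x
  define w where "w x = - k * sinh (k*(1-x))" for x
  have Wd: "\<And>x. (W has_real_derivative w x) (at x)"
    unfolding W_def w_def by (auto intro!: derivative_eq_intros)
  have wc: "continuous_on UNIV w" unfolding w_def by (intro continuous_intros)
  have Wc: "continuous_on {0..1} W" unfolding W_def by (intro continuous_intros)
  note I = ibp[OF H, of 0 1 W w, OF _ _ _ Wd wc, simplified]
  have dW: "set_integrable lborel {0..1} (\<lambda>x. d x * W x)"
    by (rule set_integrable_mult_cont[OF H01_int_sub[OF H] Wc]) auto
  have e1: "(\<lambda>x. d x * (- \<psi> 0 * cosh (k*(1-x))) + k * \<psi> x * (\<psi> 0 * sinh (k*(1-x)))) = (\<lambda>x. (- \<psi> 0) * (d x * W x + \<psi> x * w x))"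
    by (auto simp: fun_eq_iff W_def w_def algebra_simps)
  show "set_integrable lborel {0..1} (\<lambda>x. d x * (- \<psi> 0 * cosh (k*(1-x))) + k * \<psi> x * (\<psi> 0 * sinh (k*(1-x))))"
    unfolding e1 by (intro set_integrable_mult_right set_integral_add(1) dW I(1))
  have "(LINT x:{0..1}|lborel. (- \<psi> 0) * (d x * W x + \<psi> x * w x)) = (- \<psi> 0) * ((LINT x:{0..1}|lborel. d x * W x) + (LINT x:{0..1}|lborel. \<psi> x * w x))"
    by (simp only: set_integral_mult_right set_integral_add(2)[OF dW I(1)])
  also have "\<dots> = (\<psi> 0)\<^sup>2 * cosh k"
    using I(2) psi1[OF H] by (simp add: W_def power2_eq_square)
  finally show "(LINT x:{0..1}|lborel. d x * (- \<psi> 0 * cosh (k*(1-x))) + k * \<psi> x * (\<psi> 0 * sinh (k*(1-x)))) = (\<psi> 0)\<^sup>2 * cosh k"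
    unfolding e1 .
  have e2: "(\<lambda>x. (d x)\<^sup>2 + (k * \<psi> x)\<^sup>2) = (\<lambda>x. (d x)\<^sup>2 + k\<^sup>2 * (\<psi> x)\<^sup>2)"
    by (simp add: power_mult_distrib)
  have p2: "set_integrable lborel {0..1} (\<lambda>x. k\<^sup>2 * (\<psi> x)\<^sup>2)"
    using psi_sq_int[OF H, of 0 1] by auto
  show "set_integrable lborel {0..1} (\<lambda>x. (d x)\<^sup>2 + (k * \<psi> x)\<^sup>2)"
    unfolding e2 by (intro set_integral_add(1) p2 H01_int_sq_sub[OF H]) auto
  show "(LINT x:{0..1}|lborel. (d x)\<^sup>2 + (k * \<psi> x)\<^sup>2) = (LINT x:{0..1}|lborel. (d x)\<^sup>2) + k\<^sup>2 * (LINT x:{0..1}|lborel. (\<psi> x)\<^sup>2)"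
    unfolding e2 using set_integral_add(2)[OF H01_int_sq_sub[OF H, of 0 1] p2] by simp
  have e3: "(\<lambda>x. (- \<psi> 0 * cosh (k*(1-x)))\<^sup>2 + (\<psi> 0 * sinh (k*(1-x)))\<^sup>2) = (\<lambda>x. (\<psi> 0)\<^sup>2 * ((cosh (k*(1-x)))\<^sup>2 + (sinh (k*(1-x)))\<^sup>2))"
    by (simp add: fun_eq_iff power_mult_distrib algebra_simps)
  show "set_integrable lborel {0..1} (\<lambda>x. (- \<psi> 0 * cosh (k*(1-x)))\<^sup>2 + (\<psi> 0 * sinh (k*(1-x)))\<^sup>2)"
    unfolding e3 by (rule set_integrable_cont) (intro continuous_intros)
  have F: "(LINT x:{0..1}|lborel. (cosh (k*(1-x)))\<^sup>2 + (sinh (k*(1-x)))\<^sup>2)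
      = (- sinh (k*(1-1)) * cosh (k*(1-1)) / k) - (- sinh (k*(1-0)) * cosh (k*(1-0)) / k)"
  proof (rule FTC_set)
    fix x :: real
    show "((\<lambda>x. - sinh (k*(1-x)) * cosh (k*(1-x)) / k) has_real_derivative (cosh (k*(1-x)))\<^sup>2 + (sinh (k*(1-x)))\<^sup>2) (at x)"
      using k by (auto intro!: derivative_eq_intros simp: power2_eq_square field_simps)
    show "isCont (\<lambda>x. (cosh (k*(1-x)))\<^sup>2 + (sinh (k*(1-x)))\<^sup>2) x" by (intro continuous_intros)
  qed simp
  show "(LINT x:{0..1}|lborel. (- \<psi> 0 * cosh (k*(1-x)))\<^sup>2 + (\<psi> 0 * sinh (k*(1-x)))\<^sup>2) = (\<psi> 0)\<^sup>2 * (sinh k * cosh k / k)"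
    unfolding e3 set_integral_mult_right F by simp
qed

lemma half_iii_L:
  fixes \<psi> d :: "real \<Rightarrow> real"
  assumes H: "(\<psi>, d) \<in> H01" and k: "0 < k"
  shows "set_integrable lborel {-1..0} (\<lambda>x. d x * (\<psi> 0 * cosh (k*(1+x))) + k * \<psi> x * (\<psi> 0 * sinh (k*(1+x))))"
    and "(LINT x:{-1..0}|lborel. d x * (\<psi> 0 * cosh (k*(1+x))) + k * \<psi> x * (\<psi> 0 * sinh (k*(1+x)))) = (\<psi> 0)\<^sup>2 * cosh k"
    and "set_integrable lborel {-1..0} (\<lambda>x. (d x)\<^sup>2 + (k * \<psi> x)\<^sup>2)"
    and "(LINT x:{-1..0}|lborel. (d x)\<^sup>2 + (k * \<psi> x)\<^sup>2) = (LINT x:{-1..0}|lborel. (d x)\<^sup>2) + k\<^sup>2 * (LINT x:{-1..0}|lborel. (\<psi> x)\<^sup>2)"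
    and "set_integrable lborel {-1..0} (\<lambda>x. (\<psi> 0 * cosh (k*(1+x)))\<^sup>2 + (\<psi> 0 * sinh (k*(1+x)))\<^sup>2)"
    and "(LINT x:{-1..0}|lborel. (\<psi> 0 * cosh (k*(1+x)))\<^sup>2 + (\<psi> 0 * sinh (k*(1+x)))\<^sup>2) = (\<psi> 0)\<^sup>2 * (sinh k * cosh k / k)"
proof -
  define W where "W x = cosh (k*(1+x))" for x
  define w where "w x = k * sinh (k*(1+x))" for x
  have Wd: "\<And>x. (W has_real_derivative w x) (at x)"
    unfolding W_def w_def by (auto intro!: derivative_eq_intros)
  have wc: "continuous_on UNIV w" unfolding w_def by (intro continuous_intros)
  have Wc: "continuous_on {-1..0} W" unfolding W_def by (intro continuous_intros)
  note I = ibp[OF H, of "-1" 0 W w, OF _ _ _ Wd wc, simplified]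
  have dW: "set_integrable lborel {-1..0} (\<lambda>x. d x * W x)"
    by (rule set_integrable_mult_cont[OF H01_int_sub[OF H] Wc]) auto
  have e1: "(\<lambda>x. d x * (\<psi> 0 * cosh (k*(1+x))) + k * \<psi> x * (\<psi> 0 * sinh (k*(1+x)))) = (\<lambda>x. (\<psi> 0) * (d x * W x + \<psi> x * w x))"
    by (auto simp: fun_eq_iff W_def w_def algebra_simps)
  show "set_integrable lborel {-1..0} (\<lambda>x. d x * (\<psi> 0 * cosh (k*(1+x))) + k * \<psi> x * (\<psi> 0 * sinh (k*(1+x))))"
    unfolding e1 by (intro set_integrable_mult_right set_integral_add(1) dW I(1))
  have "(LINT x:{-1..0}|lborel. (\<psi> 0) * (d x * W x + \<psi> x * w x)) = (\<psi> 0) * ((LINT x:{-1..0}|lborel. d x * W x) + (LINT x:{-1..0}|lborel. \<psi> x * w x))"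
    by (simp only: set_integral_mult_right set_integral_add(2)[OF dW I(1)])
  also have "\<dots> = (\<psi> 0)\<^sup>2 * cosh k"
    using I(2) psi_m1[OF H] by (simp add: W_def power2_eq_square)
  finally show "(LINT x:{-1..0}|lborel. d x * (\<psi> 0 * cosh (k*(1+x))) + k * \<psi> x * (\<psi> 0 * sinh (k*(1+x)))) = (\<psi> 0)\<^sup>2 * cosh k"
    unfolding e1 .
  have e2: "(\<lambda>x. (d x)\<^sup>2 + (k * \<psi> x)\<^sup>2) = (\<lambda>x. (d x)\<^sup>2 + k\<^sup>2 * (\<psi> x)\<^sup>2)"
    by (simp add: power_mult_distrib)
  have p2: "set_integrable lborel {-1..0} (\<lambda>x. k\<^sup>2 * (\<psi> x)\<^sup>2)"
    using psi_sq_int[OF H, of "-1" 0] by auto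
  show "set_integrable lborel {-1..0} (\<lambda>x. (d x)\<^sup>2 + (k * \<psi> x)\<^sup>2)"
    unfolding e2 by (intro set_integral_add(1) p2 H01_int_sq_sub[OF H]) auto
  show "(LINT x:{-1..0}|lborel. (d x)\<^sup>2 + (k * \<psi> x)\<^sup>2) = (LINT x:{-1..0}|lborel. (d x)\<^sup>2) + k\<^sup>2 * (LINT x:{-1..0}|lborel. (\<psi> x)\<^sup>2)"
    unfolding e2 using set_integral_add(2)[OF H01_int_sq_sub[OF H, of "-1" 0] p2] by simp
  have e3: "(\<lambda>x. (\<psi> 0 * cosh (k*(1+x)))\<^sup>2 + (\<psi> 0 * sinh (k*(1+x)))\<^sup>2) = (\<lambda>x. (\<psi> 0)\<^sup>2 * ((cosh (k*(1+x)))\<^sup>2 + (sinh (k*(1+x)))\<^sup>2))"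
    by (simp add: fun_eq_iff power_mult_distrib algebra_simps)
  show "set_integrable lborel {-1..0} (\<lambda>x. (\<psi> 0 * cosh (k*(1+x)))\<^sup>2 + (\<psi> 0 * sinh (k*(1+x)))\<^sup>2)"
    unfolding e3 by (rule set_integrable_cont) (intro continuous_intros)
  have F: "(LINT x:{-1..0}|lborel. (cosh (k*(1+x)))\<^sup>2 + (sinh (k*(1+x)))\<^sup>2)
      = (sinh (k*(1+0)) * cosh (k*(1+0)) / k) - (sinh (k*(1+-1)) * cosh (k*(1+-1)) / k)"
  proof (rule FTC_set)
    fix x :: real
    show "((\<lambda>x. sinh (k*(1+x)) * cosh (k*(1+x)) / k) has_real_derivative (cosh (k*(1+x)))\<^sup>2 + (sinh (k*(1+x)))\<^sup>2) (at x)"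
      using k by (auto intro!: derivative_eq_intros simp: power2_eq_square field_simps)
    show "isCont (\<lambda>x. (cosh (k*(1+x)))\<^sup>2 + (sinh (k*(1+x)))\<^sup>2) x" by (intro continuous_intros)
  qed simp
  show "(LINT x:{-1..0}|lborel. (\<psi> 0 * cosh (k*(1+x)))\<^sup>2 + (\<psi> 0 * sinh (k*(1+x)))\<^sup>2) = (\<psi> 0)\<^sup>2 * (sinh k * cosh k / k)"
    unfolding e3 set_integral_mult_right F by simp
qed

lemma ineq_iii:
  fixes \<psi> d :: "real \<Rightarrow> real"
  assumes H: "(\<psi>, d) \<in> H01" and k: "0 < k"
  shows "2 * (\<psi> 0)\<^sup>2 \<le> (tanh k / k) * (L2sq d + k\<^sup>2 * L2sq \<psi>)"
proof -
  define \<alpha> where "\<alpha> = sinh k / k"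
  have a: "\<alpha> > 0" using k by (simp add: \<alpha>_def)
  note R = half_iii_R[OF H k] and L = half_iii_L[OF H k]
  have r: "2 * ((\<psi> 0)\<^sup>2 * cosh k) \<le> \<alpha> * ((LINT x:{0..1}|lborel. (d x)\<^sup>2) + k\<^sup>2 * (LINT x:{0..1}|lborel. (\<psi> x)\<^sup>2)) + (\<psi> 0)\<^sup>2 * (sinh k * cosh k / k) / \<alpha>"
    using amgm2[OF a R(1) R(3) R(5)] unfolding R(2) R(4) R(6) .
  have l: "2 * ((\<psi> 0)\<^sup>2 * cosh k) \<le> \<alpha> * ((LINT x:{-1..0}|lborel. (d x)\<^sup>2) + k\<^sup>2 * (LINT x:{-1..0}|lborel. (\<psi> x)\<^sup>2)) + (\<psi> 0)\<^sup>2 * (sinh k * cosh k / k) / \<alpha>"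
    using amgm2[OF a L(1) L(3) L(5)] unfolding L(2) L(4) L(6) .
  have q: "(\<psi> 0)\<^sup>2 * (sinh k * cosh k / k) / \<alpha> = (\<psi> 0)\<^sup>2 * cosh k"
    using k by (simp add: \<alpha>_def)
  have E: "L2sq d + k\<^sup>2 * L2sq \<psi> = ((LINT x:{0..1}|lborel. (d x)\<^sup>2) + k\<^sup>2 * (LINT x:{0..1}|lborel. (\<psi> x)\<^sup>2)) + ((LINT x:{-1..0}|lborel. (d x)\<^sup>2) + k\<^sup>2 * (LINT x:{-1..0}|lborel. (\<psi> x)\<^sup>2))"
    using L2sq_split[OF sq_int_H01[OF H]] L2sq_split[OF psi_sq_int[OF H, of "-1" 1]] by (simp add: algebra_simps)
  have "2 * ((\<psi> 0)\<^sup>2 * cosh k) \<le> \<alpha> * (L2sq d + k\<^sup>2 * L2sq \<psi>)"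
    using r l q E by (simp add: algebra_simps)
  then have "2 * (\<psi> 0)\<^sup>2 \<le> (\<alpha> / cosh k) * (L2sq d + k\<^sup>2 * L2sq \<psi>)"
    by (simp add: field_simps)
  then show ?thesis by (simp add: \<alpha>_def tanh_def mult.commute)
qed

definition psi_h :: "real \<Rightarrow> real \<Rightarrow> real" where
  "psi_h k x = (if x \<le> 0 then sinh (k*(1+x)) else sinh (k*(1-x)))"
definition d_h :: "real \<Rightarrow> real \<Rightarrow> real" where
  "d_h k x = (if x \<le> 0 then k * cosh (k*(1+x)) else - k * cosh (k*(1-x)))"

lemma H01_h: "(psi_h k, d_h k) \<in> H01"
  unfolding psi_h_def[abs_def] d_h_def[abs_def]
  by (rule H01_piece) (auto intro!: derivative_eq_intros continuous_intros)

lemma eq_iii: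
  assumes k: "0 < k"
  shows "2 * (psi_h k 0)\<^sup>2 = (tanh k / k) * (L2sq (d_h k) + k\<^sup>2 * L2sq (psi_h k))"
proof -
  define \<psi> where "\<psi> = psi_h k"
  define d where "d = d_h k"
  have H: "(\<psi>, d) \<in> H01" unfolding \<psi>_def d_def by (rule H01_h)
  have p0: "\<psi> 0 = sinh k" by (simp add: \<psi>_def psi_h_def)
  define \<alpha> where "\<alpha> = sinh k / k"
  have a: "\<alpha> > 0" using k by (simp add: \<alpha>_def)
  note R = half_iii_R[OF H k] and L = half_iii_L[OF H k]
  have r: "2 * ((\<psi> 0)\<^sup>2 * cosh k) = \<alpha> * ((LINT x:{0..1}|lborel. (d x)\<^sup>2) + k\<^sup>2 * (LINT x:{0..1}|lborel. (\<psi> x)\<^sup>2)) + (\<psi> 0)\<^sup>2 * (sinh k * cosh k / k) / \<alpha>"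
  proof -
    have "2 * (LINT x:{0..1}|lborel. d x * (- \<psi> 0 * cosh (k*(1-x))) + k * \<psi> x * (\<psi> 0 * sinh (k*(1-x)))) = \<alpha> * (LINT x:{0..1}|lborel. (d x)\<^sup>2 + (k * \<psi> x)\<^sup>2) + (LINT x:{0..1}|lborel. (- \<psi> 0 * cosh (k*(1-x)))\<^sup>2 + (\<psi> 0 * sinh (k*(1-x)))\<^sup>2) / \<alpha>"
      by (rule amgm2_eq[OF a R(1) R(3) R(5), where c=0])
         (use k in \<open>auto simp: \<alpha>_def \<psi>_def d_def psi_h_def d_h_def\<close>)
    then show ?thesis unfolding R(2) R(4) R(6) .
  qed
  have l: "2 * ((\<psi> 0)\<^sup>2 * cosh k) = \<alpha> * ((LINT x:{-1..0}|lborel. (d x)\<^sup>2) + k\<^sup>2 * (LINT x:{-1..0}|lborel. (\<psi> x)\<^sup>2)) + (\<psi> 0)\<^sup>2 * (sinh k * cosh k / k) / \<alpha>"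
  proof -
    have "2 * (LINT x:{-1..0}|lborel. d x * (\<psi> 0 * cosh (k*(1+x))) + k * \<psi> x * (\<psi> 0 * sinh (k*(1+x)))) = \<alpha> * (LINT x:{-1..0}|lborel. (d x)\<^sup>2 + (k * \<psi> x)\<^sup>2) + (LINT x:{-1..0}|lborel. (\<psi> 0 * cosh (k*(1+x)))\<^sup>2 + (\<psi> 0 * sinh (k*(1+x)))\<^sup>2) / \<alpha>"
      by (rule amgm2_eq[OF a L(1) L(3) L(5), where c=0])
         (use k in \<open>auto simp: \<alpha>_def \<psi>_def d_def psi_h_def d_h_def\<close>)
    then show ?thesis unfolding L(2) L(4) L(6) .
  qed
  have q: "(\<psi> 0)\<^sup>2 * (sinh k * cosh k / k) / \<alpha> = (\<psi> 0)\<^sup>2 * cosh k"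
    using k by (simp add: \<alpha>_def)
  have E: "L2sq d + k\<^sup>2 * L2sq \<psi> = ((LINT x:{0..1}|lborel. (d x)\<^sup>2) + k\<^sup>2 * (LINT x:{0..1}|lborel. (\<psi> x)\<^sup>2)) + ((LINT x:{-1..0}|lborel. (d x)\<^sup>2) + k\<^sup>2 * (LINT x:{-1..0}|lborel. (\<psi> x)\<^sup>2))"
    using L2sq_split[OF sq_int_H01[OF H]] L2sq_split[OF psi_sq_int[OF H, of "-1" 1]] by (simp add: algebra_simps)
  have "2 * ((\<psi> 0)\<^sup>2 * cosh k) = \<alpha> * (L2sq d + k\<^sup>2 * L2sq \<psi>)"
    using r l q E by (simp add: algebra_simps)
  then have "2 * (\<psi> 0)\<^sup>2 = (\<alpha> / cosh k) * (L2sq d + k\<^sup>2 * L2sq \<psi>)"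
    by (simp add: field_simps)
  then show ?thesis by (simp add: \<alpha>_def tanh_def \<psi>_def d_def)
qed

lemma H02D: "(\<psi>, d, dd) \<in> H02 \<Longrightarrow> (\<psi>, d) \<in> H01 \<and> (d, dd) \<in> H01"
  by (simp add: H02_def)

lemma half_ii_R:
  fixes \<psi> d dd :: "real \<Rightarrow> real"
  assumes H: "(\<psi>, d, dd) \<in> H02" and m: "0 < m"
  shows "set_integrable lborel {0..1} (\<lambda>x. dd x * (- \<psi> 0 * sinh (m*(1/2-x)) / (m * cosh (m/2))) + m * d x * (- \<psi> 0 * (cosh (m/2) - cosh (m*(1/2-x))) / (m * cosh (m/2))))"
    and "(LINT x:{0..1}|lborel. dd x * (- \<psi> 0 * sinh (m*(1/2-x)) / (m * cosh (m/2))) + m * d x * (- \<psi> 0 * (cosh (m/2) - cosh (m*(1/2-x))) / (m * cosh (m/2))))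
         = (\<psi> 0)\<^sup>2 + \<psi> 0 * d 0 * (sinh (m/2) / (m * cosh (m/2)))"
    and "set_integrable lborel {0..1} (\<lambda>x. (dd x)\<^sup>2 + (m * d x)\<^sup>2)"
    and "(LINT x:{0..1}|lborel. (dd x)\<^sup>2 + (m * d x)\<^sup>2) = (LINT x:{0..1}|lborel. (dd x)\<^sup>2) + m\<^sup>2 * (LINT x:{0..1}|lborel. (d x)\<^sup>2)"
    and "set_integrable lborel {0..1} (\<lambda>x. (- \<psi> 0 * sinh (m*(1/2-x)) / (m * cosh (m/2)))\<^sup>2 + (- \<psi> 0 * (cosh (m/2) - cosh (m*(1/2-x))) / (m * cosh (m/2)))\<^sup>2)"
    and "(LINT x:{0..1}|lborel. (- \<psi> 0 * sinh (m*(1/2-x)) / (m * cosh (m/2)))\<^sup>2 + (- \<psi> 0 * (cosh (m/2) - cosh (m*(1/2-x))) / (m * cosh (m/2)))\<^sup>2)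
         = (\<psi> 0)\<^sup>2 * ((cosh (m/2) - 2 * sinh (m/2) / m) / (m\<^sup>2 * cosh (m/2)))"
proof -
  have H1: "(\<psi>, d) \<in> H01" and H2: "(d, dd) \<in> H01" using H02D[OF H] by auto
  define C where "C = cosh (m/2)"
  define S where "S = sinh (m/2)"
  have C0: "C > 0" by (simp add: C_def)
  define v where "v x = sinh (m*(1/2-x)) / (m * C)" for x
  define v' where "v' x = - cosh (m*(1/2-x)) / C" for x
  have vd: "\<And>x. (v has_real_derivative v' x) (at x)"
    unfolding v_def v'_def using m C0 by (auto intro!: derivative_eq_intros simp: field_simps)
  have v'c: "continuous_on UNIV v'" unfolding v'_def using C0 by (intro continuous_intros) auto
  have vc: "continuous_on {0..1} v" unfolding v_def using C0 m by (intro continuous_intros) auto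
  note I = ibp[OF H2, of 0 1 v v', OF _ _ _ vd v'c, simplified]
  have ddv: "set_integrable lborel {0..1} (\<lambda>x. dd x * v x)"
    by (rule set_integrable_mult_cont[OF H01_int_sub[OF H2] vc]) auto
  have dI: "set_integrable lborel {0..1} d" by (rule H01_int_sub[OF H1]) auto
  have e1: "(\<lambda>x. dd x * (- \<psi> 0 * sinh (m*(1/2-x)) / (m * cosh (m/2))) + m * d x * (- \<psi> 0 * (cosh (m/2) - cosh (m*(1/2-x))) / (m * cosh (m/2))))
      = (\<lambda>x. (- \<psi> 0) * (d x + (d x * v' x + dd x * v x)))"
    using m C0 by (auto simp: fun_eq_iff v_def v'_def C_def field_simps)
  have i0: "set_integrable lborel {0..1} (\<lambda>x. d x * v' x + dd x * v x)"
    by (rule set_integral_add(1)[OF I(1) ddv])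
  show "set_integrable lborel {0..1} (\<lambda>x. dd x * (- \<psi> 0 * sinh (m*(1/2-x)) / (m * cosh (m/2))) + m * d x * (- \<psi> 0 * (cosh (m/2) - cosh (m*(1/2-x))) / (m * cosh (m/2))))"
    unfolding e1 by (intro set_integrable_mult_right set_integral_add(1) dI i0)
  have "(LINT x:{0..1}|lborel. (- \<psi> 0) * (d x + (d x * v' x + dd x * v x)))
      = (- \<psi> 0) * ((LINT x:{0..1}|lborel. d x) + ((LINT x:{0..1}|lborel. d x * v' x) + (LINT x:{0..1}|lborel. dd x * v x)))"
    by (simp only: set_integral_mult_right set_integral_add(2)[OF dI i0] set_integral_add(2)[OF I(1) ddv])
  also have "\<dots> = (\<psi> 0)\<^sup>2 + \<psi> 0 * d 0 * (S / (m * C))"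
    using I(2) psi1[OF H2] psi0_right[OF H1] by (simp add: v_def S_def power2_eq_square algebra_simps)
  finally show "(LINT x:{0..1}|lborel. dd x * (- \<psi> 0 * sinh (m*(1/2-x)) / (m * cosh (m/2))) + m * d x * (- \<psi> 0 * (cosh (m/2) - cosh (m*(1/2-x))) / (m * cosh (m/2))))
         = (\<psi> 0)\<^sup>2 + \<psi> 0 * d 0 * (sinh (m/2) / (m * cosh (m/2)))"
    unfolding e1 by (simp add: S_def C_def)
  have e2: "(\<lambda>x. (dd x)\<^sup>2 + (m * d x)\<^sup>2) = (\<lambda>x. (dd x)\<^sup>2 + m\<^sup>2 * (d x)\<^sup>2)"
    by (simp add: power_mult_distrib)
  have p2: "set_integrable lborel {0..1} (\<lambda>x. m\<^sup>2 * (d x)\<^sup>2)"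
    using H01_int_sq_sub[OF H1, of 0 1] by auto
  show "set_integrable lborel {0..1} (\<lambda>x. (dd x)\<^sup>2 + (m * d x)\<^sup>2)"
    unfolding e2 by (intro set_integral_add(1) p2 H01_int_sq_sub[OF H2]) auto
  show "(LINT x:{0..1}|lborel. (dd x)\<^sup>2 + (m * d x)\<^sup>2) = (LINT x:{0..1}|lborel. (dd x)\<^sup>2) + m\<^sup>2 * (LINT x:{0..1}|lborel. (d x)\<^sup>2)"
    unfolding e2 using set_integral_add(2)[OF H01_int_sq_sub[OF H2, of 0 1] p2] by simp
  define Q where "Q x = ((sinh (m*(1/2-x)))\<^sup>2 + (C - cosh (m*(1/2-x)))\<^sup>2) / (m * C)\<^sup>2" for x
  have e3: "(\<lambda>x. (- \<psi> 0 * sinh (m*(1/2-x)) / (m * cosh (m/2)))\<^sup>2 + (- \<psi> 0 * (cosh (m/2) - cosh (m*(1/2-x))) / (m * cosh (m/2)))\<^sup>2)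
     = (\<lambda>x. (\<psi> 0)\<^sup>2 * Q x)"
    using m by (simp add: fun_eq_iff Q_def C_def power2_eq_square field_simps)
  show "set_integrable lborel {0..1} (\<lambda>x. (- \<psi> 0 * sinh (m*(1/2-x)) / (m * cosh (m/2)))\<^sup>2 + (- \<psi> 0 * (cosh (m/2) - cosh (m*(1/2-x))) / (m * cosh (m/2)))\<^sup>2)"
    unfolding e3 Q_def using m C0 by (intro set_integrable_cont continuous_intros) auto
  define F where "F x = (- sinh (m*(1/2-x)) * cosh (m*(1/2-x)) / m + C\<^sup>2 * x + 2 * C * sinh (m*(1/2-x)) / m) / (m * C)\<^sup>2" for x
  have FQ: "(LINT x:{0..1}|lborel. Q x) = F 1 - F 0"
  proof (rule FTC_set)
    fix x :: real
    show "(F has_real_derivative Q x) (at x)"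
      unfolding F_def Q_def using m C0
      by (auto intro!: derivative_eq_intros simp: power2_eq_square field_simps)
    show "isCont Q x" unfolding Q_def using m C0 by (intro continuous_intros) auto
  qed simp
  have a1: "m * (1/2 - 1) = - (m/2)" and a0: "m * (1/2 - 0) = m/2" by simp_all
  have "F 1 - F 0 = (C - 2 * S / m) / (m\<^sup>2 * C)"
    unfolding F_def a1 a0 using m C0 by (simp add: S_def C_def power2_eq_square field_simps)
  then show "(LINT x:{0..1}|lborel. (- \<psi> 0 * sinh (m*(1/2-x)) / (m * cosh (m/2)))\<^sup>2 + (- \<psi> 0 * (cosh (m/2) - cosh (m*(1/2-x))) / (m * cosh (m/2)))\<^sup>2)
         = (\<psi> 0)\<^sup>2 * ((cosh (m/2) - 2 * sinh (m/2) / m) / (m\<^sup>2 * cosh (m/2)))"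
    unfolding e3 set_integral_mult_right FQ by (simp add: S_def C_def)
qed

lemma half_ii_L:
  fixes \<psi> d dd :: "real \<Rightarrow> real"
  assumes H: "(\<psi>, d, dd) \<in> H02" and m: "0 < m"
  shows "set_integrable lborel {-1..0} (\<lambda>x. dd x * (- \<psi> 0 * sinh (m*(1/2+x)) / (m * cosh (m/2))) + m * d x * (- \<psi> 0 * (cosh (m*(1/2+x)) - cosh (m/2)) / (m * cosh (m/2))))"
    and "(LINT x:{-1..0}|lborel. dd x * (- \<psi> 0 * sinh (m*(1/2+x)) / (m * cosh (m/2))) + m * d x * (- \<psi> 0 * (cosh (m*(1/2+x)) - cosh (m/2)) / (m * cosh (m/2))))
         = (\<psi> 0)\<^sup>2 - \<psi> 0 * d 0 * (sinh (m/2) / (m * cosh (m/2)))"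
    and "set_integrable lborel {-1..0} (\<lambda>x. (dd x)\<^sup>2 + (m * d x)\<^sup>2)"
    and "(LINT x:{-1..0}|lborel. (dd x)\<^sup>2 + (m * d x)\<^sup>2) = (LINT x:{-1..0}|lborel. (dd x)\<^sup>2) + m\<^sup>2 * (LINT x:{-1..0}|lborel. (d x)\<^sup>2)"
    and "set_integrable lborel {-1..0} (\<lambda>x. (- \<psi> 0 * sinh (m*(1/2+x)) / (m * cosh (m/2)))\<^sup>2 + (- \<psi> 0 * (cosh (m*(1/2+x)) - cosh (m/2)) / (m * cosh (m/2)))\<^sup>2)"
    and "(LINT x:{-1..0}|lborel. (- \<psi> 0 * sinh (m*(1/2+x)) / (m * cosh (m/2)))\<^sup>2 + (- \<psi> 0 * (cosh (m*(1/2+x)) - cosh (m/2)) / (m * cosh (m/2)))\<^sup>2)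
         = (\<psi> 0)\<^sup>2 * ((cosh (m/2) - 2 * sinh (m/2) / m) / (m\<^sup>2 * cosh (m/2)))"
proof -
  have H1: "(\<psi>, d) \<in> H01" and H2: "(d, dd) \<in> H01" using H02D[OF H] by auto
  define C where "C = cosh (m/2)"
  define S where "S = sinh (m/2)"
  have C0: "C > 0" by (simp add: C_def)
  define v where "v x = sinh (m*(1/2+x)) / (m * C)" for x
  define v' where "v' x = cosh (m*(1/2+x)) / C" for x
  have vd: "\<And>x. (v has_real_derivative v' x) (at x)"
    unfolding v_def v'_def using m C0 by (auto intro!: derivative_eq_intros simp: field_simps)
  have v'c: "continuous_on UNIV v'" unfolding v'_def using C0 by (intro continuous_intros) auto
  have vc: "continuous_on {-1..0} v" unfolding v_def using C0 m by (intro continuous_intros) auto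
  note I = ibp[OF H2, of "-1" 0 v v', OF _ _ _ vd v'c, simplified]
  have ddv: "set_integrable lborel {-1..0} (\<lambda>x. dd x * v x)"
    by (rule set_integrable_mult_cont[OF H01_int_sub[OF H2] vc]) auto
  have dI: "set_integrable lborel {-1..0} d" by (rule H01_int_sub[OF H1]) auto
  have e1: "(\<lambda>x. dd x * (- \<psi> 0 * sinh (m*(1/2+x)) / (m * cosh (m/2))) + m * d x * (- \<psi> 0 * (cosh (m*(1/2+x)) - cosh (m/2)) / (m * cosh (m/2))))
      = (\<lambda>x. (- \<psi> 0) * ((d x * v' x + dd x * v x) - d x))"
    using m C0 by (auto simp: fun_eq_iff v_def v'_def C_def field_simps)
  have i0: "set_integrable lborel {-1..0} (\<lambda>x. d x * v' x + dd x * v x)"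
    by (rule set_integral_add(1)[OF I(1) ddv])
  show "set_integrable lborel {-1..0} (\<lambda>x. dd x * (- \<psi> 0 * sinh (m*(1/2+x)) / (m * cosh (m/2))) + m * d x * (- \<psi> 0 * (cosh (m*(1/2+x)) - cosh (m/2)) / (m * cosh (m/2))))"
    unfolding e1 by (intro set_integrable_mult_right set_integral_diff(1) dI i0)
  have "(LINT x:{-1..0}|lborel. (- \<psi> 0) * ((d x * v' x + dd x * v x) - d x))
      = (- \<psi> 0) * (((LINT x:{-1..0}|lborel. d x * v' x) + (LINT x:{-1..0}|lborel. dd x * v x)) - (LINT x:{-1..0}|lborel. d x))"
    by (simp only: set_integral_mult_right set_integral_diff(2)[OF i0 dI] set_integral_add(2)[OF I(1) ddv])
  also have "\<dots> = (\<psi> 0)\<^sup>2 - \<psi> 0 * d 0 * (S / (m * C))"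
    using I(2) psi_m1[OF H2] psi0_left[OF H1] by (simp add: v_def S_def power2_eq_square algebra_simps)
  finally show "(LINT x:{-1..0}|lborel. dd x * (- \<psi> 0 * sinh (m*(1/2+x)) / (m * cosh (m/2))) + m * d x * (- \<psi> 0 * (cosh (m*(1/2+x)) - cosh (m/2)) / (m * cosh (m/2))))
         = (\<psi> 0)\<^sup>2 - \<psi> 0 * d 0 * (sinh (m/2) / (m * cosh (m/2)))"
    unfolding e1 by (simp add: S_def C_def)
  have e2: "(\<lambda>x. (dd x)\<^sup>2 + (m * d x)\<^sup>2) = (\<lambda>x. (dd x)\<^sup>2 + m\<^sup>2 * (d x)\<^sup>2)"
    by (simp add: power_mult_distrib)
  have p2: "set_integrable lborel {-1..0} (\<lambda>x. m\<^sup>2 * (d x)\<^sup>2)"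
    using H01_int_sq_sub[OF H1, of "-1" 0] by auto
  show "set_integrable lborel {-1..0} (\<lambda>x. (dd x)\<^sup>2 + (m * d x)\<^sup>2)"
    unfolding e2 by (intro set_integral_add(1) p2 H01_int_sq_sub[OF H2]) auto
  show "(LINT x:{-1..0}|lborel. (dd x)\<^sup>2 + (m * d x)\<^sup>2) = (LINT x:{-1..0}|lborel. (dd x)\<^sup>2) + m\<^sup>2 * (LINT x:{-1..0}|lborel. (d x)\<^sup>2)"
    unfolding e2 using set_integral_add(2)[OF H01_int_sq_sub[OF H2, of "-1" 0] p2] by simp
  define Q where "Q x = ((sinh (m*(1/2+x)))\<^sup>2 + (cosh (m*(1/2+x)) - C)\<^sup>2) / (m * C)\<^sup>2" for x
  have e3: "(\<lambda>x. (- \<psi> 0 * sinh (m*(1/2+x)) / (m * cosh (m/2)))\<^sup>2 + (- \<psi> 0 * (cosh (m*(1/2+x)) - cosh (m/2)) / (m * cosh (m/2)))\<^sup>2)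
     = (\<lambda>x. (\<psi> 0)\<^sup>2 * Q x)"
    using m by (simp add: fun_eq_iff Q_def C_def power2_eq_square field_simps)
  show "set_integrable lborel {-1..0} (\<lambda>x. (- \<psi> 0 * sinh (m*(1/2+x)) / (m * cosh (m/2)))\<^sup>2 + (- \<psi> 0 * (cosh (m*(1/2+x)) - cosh (m/2)) / (m * cosh (m/2)))\<^sup>2)"
    unfolding e3 Q_def using m C0 by (intro set_integrable_cont continuous_intros) auto
  define F where "F x = (sinh (m*(1/2+x)) * cosh (m*(1/2+x)) / m + C\<^sup>2 * x - 2 * C * sinh (m*(1/2+x)) / m) / (m * C)\<^sup>2" for x
  have FQ: "(LINT x:{-1..0}|lborel. Q x) = F 0 - F (-1)"
  proof (rule FTC_set)
    fix x :: real
    show "(F has_real_derivative Q x) (at x)"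
      unfolding F_def Q_def using m C0
      by (auto intro!: derivative_eq_intros simp: power2_eq_square field_simps)
    show "isCont Q x" unfolding Q_def using m C0 by (intro continuous_intros) auto
  qed simp
  have a1: "m * (1/2 + -1) = - (m/2)" and a0: "m * (1/2 + 0) = m/2" by simp_all
  have "F 0 - F (-1) = (C - 2 * S / m) / (m\<^sup>2 * C)"
    unfolding F_def a1 a0 using m C0 by (simp add: S_def C_def power2_eq_square field_simps)
  then show "(LINT x:{-1..0}|lborel. (- \<psi> 0 * sinh (m*(1/2+x)) / (m * cosh (m/2)))\<^sup>2 + (- \<psi> 0 * (cosh (m*(1/2+x)) - cosh (m/2)) / (m * cosh (m/2)))\<^sup>2)
         = (\<psi> 0)\<^sup>2 * ((cosh (m/2) - 2 * sinh (m/2) / m) / (m\<^sup>2 * cosh (m/2)))"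
    unfolding e3 set_integral_mult_right FQ by (simp add: S_def C_def)
qed

lemma Vpos: fixes m :: real assumes "0 < m" shows "0 < (cosh (m/2) - 2 * sinh (m/2) / m) / (m\<^sup>2 * cosh (m/2))"
proof -
  have "tanh (m/2) < m/2" using tanh_lt[of "m/2"] assms by simp
  then have "sinh (m/2) < m/2 * cosh (m/2)" by (simp add: tanh_def divide_less_eq)
  then have "2 * sinh (m/2) / m < cosh (m/2)" using assms by (simp add: field_simps)
  then show ?thesis using assms by simp
qed

lemma ineq_ii:
  fixes \<psi> d dd :: "real \<Rightarrow> real"
  assumes H: "(\<psi>, d, dd) \<in> H02" and m: "0 < m"
  shows "2 * (\<psi> 0)\<^sup>2 \<le> ((cosh (m/2) - 2 * sinh (m/2) / m) / (m\<^sup>2 * cosh (m/2))) * (L2sq dd + m\<^sup>2 * L2sq d)"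
proof -
  have H1: "(\<psi>, d) \<in> H01" and H2: "(d, dd) \<in> H01" using H02D[OF H] by auto
  define V where "V = (cosh (m/2) - 2 * sinh (m/2) / m) / (m\<^sup>2 * cosh (m/2))"
  have a: "V > 0" using Vpos[OF m] by (simp add: V_def)
  note R = half_ii_R[OF H m, folded V_def] and L = half_ii_L[OF H m, folded V_def]
  have r: "2 * ((\<psi> 0)\<^sup>2 + \<psi> 0 * d 0 * (sinh (m/2) / (m * cosh (m/2)))) \<le> V * ((LINT x:{0..1}|lborel. (dd x)\<^sup>2) + m\<^sup>2 * (LINT x:{0..1}|lborel. (d x)\<^sup>2)) + (\<psi> 0)\<^sup>2 * V / V"
    using amgm2[OF a R(1) R(3) R(5)] unfolding R(2) R(4) R(6) .
  have l: "2 * ((\<psi> 0)\<^sup>2 - \<psi> 0 * d 0 * (sinh (m/2) / (m * cosh (m/2)))) \<le> V * ((LINT x:{-1..0}|lborel. (dd x)\<^sup>2) + m\<^sup>2 * (LINT x:{-1..0}|lborel. (d x)\<^sup>2)) + (\<psi> 0)\<^sup>2 * V / V"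
    using amgm2[OF a L(1) L(3) L(5)] unfolding L(2) L(4) L(6) .
  have E: "L2sq dd + m\<^sup>2 * L2sq d = ((LINT x:{0..1}|lborel. (dd x)\<^sup>2) + m\<^sup>2 * (LINT x:{0..1}|lborel. (d x)\<^sup>2)) + ((LINT x:{-1..0}|lborel. (dd x)\<^sup>2) + m\<^sup>2 * (LINT x:{-1..0}|lborel. (d x)\<^sup>2))"
    using L2sq_split[OF sq_int_H01[OF H1]] L2sq_split[OF sq_int_H01[OF H2]] by (simp add: algebra_simps)
  show ?thesis using r l E a unfolding V_def[symmetric] by (simp add: algebra_simps)
qed

definition psi_v :: "real \<Rightarrow> real \<Rightarrow> real" where
  "psi_v m x = (if x \<le> 0 then cosh (m/2) * (1+x) - (sinh (m*(1/2+x)) + sinh (m/2)) / m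
                else cosh (m/2) * (1-x) - (sinh (m*(1/2-x)) + sinh (m/2)) / m)"
definition d_v :: "real \<Rightarrow> real \<Rightarrow> real" where
  "d_v m x = (if x \<le> 0 then cosh (m/2) - cosh (m*(1/2+x)) else cosh (m*(1/2-x)) - cosh (m/2))"
definition dd_v :: "real \<Rightarrow> real \<Rightarrow> real" where
  "dd_v m x = (if x \<le> 0 then - m * sinh (m*(1/2+x)) else - m * sinh (m*(1/2-x)))"

lemma H02_v:
  assumes m: "0 < m"
  shows "(psi_v m, d_v m, dd_v m) \<in> H02"
proof -
  have a1: "m * (1/2 + -1) = - (m/2)" and a2: "m * (1/2 - 1) = - (m/2)" by simp_all
  have "(psi_v m, d_v m) \<in> H01"
    unfolding psi_v_def[abs_def] d_v_def[abs_def]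
    by (rule H01_piece) (use m in \<open>auto intro!: derivative_eq_intros continuous_intros simp: a1 a2 field_simps\<close>)
  moreover have "(d_v m, dd_v m) \<in> H01"
    unfolding d_v_def[abs_def] dd_v_def[abs_def]
    by (rule H01_piece) (use m in \<open>auto intro!: derivative_eq_intros continuous_intros simp: a1 a2\<close>)
  ultimately show ?thesis by (simp add: H02_def)
qed

lemma psi_v0: "psi_v m 0 = cosh (m/2) - 2 * sinh (m/2) / m"
  by (simp add: psi_v_def)

lemma eq_ii:
  assumes m: "0 < m"
  shows "2 * (psi_v m 0)\<^sup>2 = ((cosh (m/2) - 2 * sinh (m/2) / m) / (m\<^sup>2 * cosh (m/2))) * (L2sq (dd_v m) + m\<^sup>2 * L2sq (d_v m))"
proof -
  define \<psi> where "\<psi> = psi_v m"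
  define d where "d = d_v m"
  define dd where "dd = dd_v m"
  have H: "(\<psi>, d, dd) \<in> H02" unfolding \<psi>_def d_def dd_def by (rule H02_v[OF m])
  have H1: "(\<psi>, d) \<in> H01" and H2: "(d, dd) \<in> H01" using H02D[OF H] by auto
  define V where "V = (cosh (m/2) - 2 * sinh (m/2) / m) / (m\<^sup>2 * cosh (m/2))"
  have a: "V > 0" using Vpos[OF m] by (simp add: V_def)
  have c: "\<psi> 0 = V * m\<^sup>2 * cosh (m/2)" using m by (simp add: \<psi>_def psi_v0 V_def)
  note R = half_ii_R[OF H m, folded V_def] and L = half_ii_L[OF H m, folded V_def]
  have r: "2 * ((\<psi> 0)\<^sup>2 + \<psi> 0 * d 0 * (sinh (m/2) / (m * cosh (m/2)))) = V * ((LINT x:{0..1}|lborel. (dd x)\<^sup>2) + m\<^sup>2 * (LINT x:{0..1}|lborel. (d x)\<^sup>2)) + (\<psi> 0)\<^sup>2 * V / V"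
  proof -
    have "2 * (LINT x:{0..1}|lborel. dd x * (- \<psi> 0 * sinh (m*(1/2-x)) / (m * cosh (m/2))) + m * d x * (- \<psi> 0 * (cosh (m/2) - cosh (m*(1/2-x))) / (m * cosh (m/2))))
      = V * (LINT x:{0..1}|lborel. (dd x)\<^sup>2 + (m * d x)\<^sup>2) + (LINT x:{0..1}|lborel. (- \<psi> 0 * sinh (m*(1/2-x)) / (m * cosh (m/2)))\<^sup>2 + (- \<psi> 0 * (cosh (m/2) - cosh (m*(1/2-x))) / (m * cosh (m/2)))\<^sup>2) / V"
      by (rule amgm2_eq[OF a R(1) R(3) R(5), where c=0])
         (use m in \<open>auto simp: c d_def dd_def d_v_def dd_v_def field_simps power2_eq_square\<close>)
    then show ?thesis unfolding R(2) R(4) R(6) .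
  qed
  have l: "2 * ((\<psi> 0)\<^sup>2 - \<psi> 0 * d 0 * (sinh (m/2) / (m * cosh (m/2)))) = V * ((LINT x:{-1..0}|lborel. (dd x)\<^sup>2) + m\<^sup>2 * (LINT x:{-1..0}|lborel. (d x)\<^sup>2)) + (\<psi> 0)\<^sup>2 * V / V"
  proof -
    have "2 * (LINT x:{-1..0}|lborel. dd x * (- \<psi> 0 * sinh (m*(1/2+x)) / (m * cosh (m/2))) + m * d x * (- \<psi> 0 * (cosh (m*(1/2+x)) - cosh (m/2)) / (m * cosh (m/2))))
      = V * (LINT x:{-1..0}|lborel. (dd x)\<^sup>2 + (m * d x)\<^sup>2) + (LINT x:{-1..0}|lborel. (- \<psi> 0 * sinh (m*(1/2+x)) / (m * cosh (m/2)))\<^sup>2 + (- \<psi> 0 * (cosh (m*(1/2+x)) - cosh (m/2)) / (m * cosh (m/2)))\<^sup>2) / V"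
      by (rule amgm2_eq[OF a L(1) L(3) L(5), where c=0])
         (use m in \<open>auto simp: c d_def dd_def d_v_def dd_v_def field_simps power2_eq_square\<close>)
    then show ?thesis unfolding L(2) L(4) L(6) .
  qed
  have E: "L2sq dd + m\<^sup>2 * L2sq d = ((LINT x:{0..1}|lborel. (dd x)\<^sup>2) + m\<^sup>2 * (LINT x:{0..1}|lborel. (d x)\<^sup>2)) + ((LINT x:{-1..0}|lborel. (dd x)\<^sup>2) + m\<^sup>2 * (LINT x:{-1..0}|lborel. (d x)\<^sup>2))"
    using L2sq_split[OF sq_int_H01[OF H1]] L2sq_split[OF sq_int_H01[OF H2]] by (simp add: algebra_simps)
  have "2 * (\<psi> 0)\<^sup>2 = V * (L2sq dd + m\<^sup>2 * L2sq d)" using r l E a by (simp add: algebra_simps)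
  then show ?thesis unfolding V_def \<psi>_def d_def dd_def .
qed

lemma sinh_sq_FTC:
  fixes p q :: real
  assumes p: "0 < p"
  shows "(LINT x:{0..1}|lborel. (sinh (p*(q-x)))\<^sup>2)
     = (- sinh (p*(q-1)) * cosh (p*(q-1)) / (2*p) - 1/2) - (- sinh (p*q) * cosh (p*q) / (2*p))"
proof -
  have "(LINT x:{0..1}|lborel. (sinh (p*(q-x)))\<^sup>2)
     = (- sinh (p*(q-1)) * cosh (p*(q-1)) / (2*p) - 1/2) - (- sinh (p*(q-0)) * cosh (p*(q-0)) / (2*p) - 0/2)"
  proof (rule FTC_set[where F="\<lambda>x. - sinh (p*(q-x)) * cosh (p*(q-x)) / (2*p) - x/2"])
    fix x :: real
    have cs: "(cosh (p*(q-x)))\<^sup>2 = (sinh (p*(q-x)))\<^sup>2 + 1" by (rule cosh_square_eq)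
    show "((\<lambda>x. - sinh (p*(q-x)) * cosh (p*(q-x)) / (2*p) - x/2) has_real_derivative (sinh (p*(q-x)))\<^sup>2) (at x)"
      using p cs by (auto intro!: derivative_eq_intros simp: power2_eq_square field_simps)
    show "isCont (\<lambda>x. (sinh (p*(q-x)))\<^sup>2) x" by (intro continuous_intros)
  qed simp
  then show ?thesis by simp
qed

lemma L2sq_dd_v_pos:
  assumes m: "0 < m"
  shows "0 < L2sq (dd_v m)"
proof -
  have H2: "(d_v m, dd_v m) \<in> H01" using H02D[OF H02_v[OF m]] by auto
  have "(LINT x:{0..1}|lborel. (dd_v m x)\<^sup>2) = (LINT x:{0..1}|lborel. m\<^sup>2 * (sinh (m*(1/2-x)))\<^sup>2)"
    by (rule set_lebesgue_integral_cong) (auto simp: dd_v_def power_mult_distrib)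
  also have "\<dots> = m\<^sup>2 * (LINT x:{0..1}|lborel. (sinh (m*(1/2-x)))\<^sup>2)" by simp
  also have "(LINT x:{0..1}|lborel. (sinh (m*(1/2-x)))\<^sup>2) = (- sinh (-(m/2)) * cosh (-(m/2)) / (2*m) - 1/2) - (- sinh (m/2) * cosh (m/2) / (2*m))"
  proof -
    have a1: "m * (1/2 - 1) = -(m/2)" and a2: "m * (1/2) = m/2" by simp_all
    show ?thesis using sinh_sq_FTC[OF m, of "1/2"] unfolding a1 a2 .
  qed
  also have "m\<^sup>2 * ((- sinh (-(m/2)) * cosh (-(m/2)) / (2*m) - 1/2) - (- sinh (m/2) * cosh (m/2) / (2*m))) = m\<^sup>2 * (sinh (m/2) * cosh (m/2) / m - 1/2)"
    using m by (simp add: field_simps)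
  finally have R: "(LINT x:{0..1}|lborel. (dd_v m x)\<^sup>2) = m\<^sup>2 * (sinh (m/2) * cosh (m/2) / m - 1/2)" .
  have "m < sinh m" by (rule sinh_gt[OF m])
  also have "sinh m = 2 * sinh (m/2) * cosh (m/2)" using sinh_double[of "m/2"] by simp
  finally have "0 < sinh (m/2) * cosh (m/2) / m - 1/2" using m by (simp add: field_simps)
  then have "0 < (LINT x:{0..1}|lborel. (dd_v m x)\<^sup>2)" unfolding R using m by simp
  then show ?thesis
    using L2sq_split[OF sq_int_H01[OF H2]] L2sq_nonneg_part[where f="dd_v m" and A="{-1..0}"] by simp
qed

lemma L2sq_psi_h_pos:
  assumes k: "0 < k"
  shows "0 < L2sq (psi_h k)"
proof -
  have H: "(psi_h k, d_h k) \<in> H01" by (rule H01_h)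
  have "(LINT x:{0..1}|lborel. (psi_h k x)\<^sup>2) = (LINT x:{0..1}|lborel. (sinh (k*(1-x)))\<^sup>2)"
    by (rule set_lebesgue_integral_cong) (auto simp: psi_h_def)
  also have "\<dots> = (- sinh (k*(1-1)) * cosh (k*(1-1)) / (2*k) - 1/2) - (- sinh (k*1) * cosh (k*1) / (2*k))"
    by (rule sinh_sq_FTC[OF k])
  also have "\<dots> = sinh k * cosh k / (2*k) - 1/2" by simp
  finally have R: "(LINT x:{0..1}|lborel. (psi_h k x)\<^sup>2) = sinh k * cosh k / (2*k) - 1/2" .
  have "2*k < sinh (2*k)" using sinh_gt[of "2*k"] k by simp
  also have "sinh (2*k) = 2 * sinh k * cosh k" by (rule sinh_double)
  finally have "0 < sinh k * cosh k / (2*k) - 1/2" using k by (simp add: field_simps)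
  then have "0 < (LINT x:{0..1}|lborel. (psi_h k x)\<^sup>2)" unfolding R .
  then show ?thesis
    using L2sq_split[OF psi_sq_int[OF H, of "-1" 1]] L2sq_nonneg_part[where f="psi_h k" and A="{-1..0}"] by simp
qed

definition psi_t :: "real \<Rightarrow> real" where "psi_t x = (if x \<le> 0 then 1 + x else 1 - x)"
definition d_t :: "real \<Rightarrow> real" where "d_t x = (if x \<le> 0 then 1 else -1)"

lemma H01_t: "(psi_t, d_t) \<in> H01"
  unfolding psi_t_def[abs_def] d_t_def[abs_def]
  by (rule H01_piece) (auto intro!: derivative_eq_intros continuous_intros)

lemma L2sq_t: "L2sq d_t = 2"
proof -
  have "L2sq d_t = (LINT x:{-1..1::real}|lborel. (1::real))"
    unfolding L2sq_def by (rule set_lebesgue_integral_cong) (auto simp: d_t_def)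
  also have "\<dots> = 1 - (-1)"
    by (rule FTC_set[where F="\<lambda>x. x"]) (auto intro!: derivative_eq_intros)
  finally show ?thesis by simp
qed

lemma L2sq_nonneg: "0 \<le> L2sq f"
  unfolding L2sq_def by (rule L2sq_nonneg_part)

lemma nonzero_t: "nonzero psi_t" by (auto simp: nonzero_def psi_t_def intro!: bexI[of _ 0])

lemma part_i:
  fixes g rho :: real
  assumes g: "g > 0" and rho: "rho > 0"
  shows "\<And>\<psi> d. (\<psi>, d) \<in> H01 \<Longrightarrow> Qc g rho \<psi> d \<le> g * rho / 2"
    and "Qc g rho psi_t d_t = g * rho / 2"
    and "Bc2 g rho = g * rho / 2"
proof -
  have K: "g * rho > 0" using g rho by simp
  show bound: "Qc g rho \<psi> d \<le> g * rho / 2" if H: "(\<psi>, d) \<in> H01" for \<psi> d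
  proof (cases "L2sq d = 0")
    case True then show ?thesis using K by (simp add: Qc_def)
  next
    case False
    then have L: "L2sq d > 0" using L2sq_nonneg[of d] by simp
    have "g * rho * (2 * (\<psi> 0)\<^sup>2) \<le> g * rho * L2sq d"
      using ineq_i[OF H] K by (intro mult_left_mono) auto
    then show ?thesis using L by (simp add: Qc_def pos_divide_le_eq)
  qed
  show w: "Qc g rho psi_t d_t = g * rho / 2" by (simp add: Qc_def L2sq_t psi_t_def)
  show "Bc2 g rho = g * rho / 2"
    unfolding Bc2_def
  proof (rule cSup_eq_maximum)
    show "g * rho / 2 \<in> {Qc g rho \<psi> d |\<psi> d. (\<psi>, d) \<in> H01 \<and> nonzero \<psi>}"
      using w H01_t nonzero_t by force
  qed (use bound in auto)
qed

lemma Bc_val: "g > 0 \<Longrightarrow> rho > 0 \<Longrightarrow> Bc g rho = sqrt (g * rho / 2)"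
  by (simp add: Bc_def part_i)

lemma B_lt: assumes "g > 0" "rho > 0" "\<bar>B\<bar> < Bc g rho" shows "B\<^sup>2 < g * rho / 2"
proof -
  have c: "0 < g * rho / 2" using assms by simp
  have "\<bar>B\<bar>\<^sup>2 < (sqrt (g * rho / 2))\<^sup>2"
    using assms Bc_val[OF assms(1,2)] by (intro power_strict_mono) auto
  then show ?thesis using c by simp
qed

lemma part_iii:
  fixes g rho B :: real
  assumes g: "g > 0" and rho: "rho > 0" and B0: "0 < \<bar>B\<bar>" and B1: "\<bar>B\<bar> < Bc g rho"
  defines "k \<equiv> Tinv (B\<^sup>2 / (g * rho / 2))"
  shows "0 < k"
    and "\<And>\<psi> d. (\<psi>, d) \<in> H01 \<Longrightarrow> Qhc g rho B \<psi> d \<le> k\<^sup>2"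
    and "Qhc g rho B (psi_h k) (d_h k) = k\<^sup>2"
    and "xi_hc2 g rho B = k\<^sup>2"
proof -
  define c where "c = g * rho / 2"
  have c0: "0 < c" using g rho by (simp add: c_def)
  define r where "r = B\<^sup>2 / c"
  have Bsq: "0 < B\<^sup>2" using B0 by simp
  have r0: "0 < r" "r < 1" using Bsq B_lt[OF g rho B1] c0 by (auto simp: r_def c_def)
  have kr: "k = Tinv r" by (simp add: k_def r_def c_def)
  show k0: "0 < k" using Tinv(1)[OF r0] kr by simp
  have Tk: "tanh k / k = r" using Tinv(2)[OF r0] kr by (simp add: Tf_def)
  have gr: "g * rho = 2 * c" by (simp add: c_def)
  have Bc: "B\<^sup>2 = c * r" using c0 by (simp add: r_def)
  show bound: "Qhc g rho B \<psi> d \<le> k\<^sup>2" if H: "(\<psi>, d) \<in> H01" for \<psi> d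
  proof -
    have "2 * (\<psi> 0)\<^sup>2 \<le> r * (L2sq d + k\<^sup>2 * L2sq \<psi>)" using ineq_iii[OF H k0] Tk by simp
    then have "c * (2 * (\<psi> 0)\<^sup>2) \<le> c * (r * (L2sq d + k\<^sup>2 * L2sq \<psi>))"
      using c0 by (intro mult_left_mono) auto
    then have num: "Dvc g rho B \<psi> d \<le> B\<^sup>2 * k\<^sup>2 * L2sq \<psi>"
      unfolding Dvc_def gr by (simp add: Bc algebra_simps)
    show ?thesis
    proof (cases "L2sq \<psi> = 0")
      case True then show ?thesis by (simp add: Qhc_def)
    next
      case False
      then have "L2sq \<psi> > 0" using L2sq_nonneg[of \<psi>] by simp
      then have "0 < B\<^sup>2 * L2sq \<psi>" using Bsq by simp
      then show ?thesis using num by (simp add: Qhc_def pos_divide_le_eq algebra_simps)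
    qed
  qed
  have wit: "Qhc g rho B (psi_h k) (d_h k) = k\<^sup>2"
  proof -
    have "2 * (psi_h k 0)\<^sup>2 = r * (L2sq (d_h k) + k\<^sup>2 * L2sq (psi_h k))" using eq_iii[OF k0] Tk by simp
    then have "c * (2 * (psi_h k 0)\<^sup>2) = c * (r * (L2sq (d_h k) + k\<^sup>2 * L2sq (psi_h k)))" by simp
    then have num: "Dvc g rho B (psi_h k) (d_h k) = B\<^sup>2 * k\<^sup>2 * L2sq (psi_h k)"
      unfolding Dvc_def gr by (simp add: Bc algebra_simps)
    have "0 < B\<^sup>2 * L2sq (psi_h k)" using Bsq L2sq_psi_h_pos[OF k0] by simp
    then have "Dvc g rho B (psi_h k) (d_h k) / (\<bar>B\<bar>\<^sup>2 * L2sq (psi_h k)) = k\<^sup>2"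
      unfolding num using B0 L2sq_psi_h_pos[OF k0] by (simp add: field_simps)
    then show ?thesis by (simp add: Qhc_def)
  qed
  show "Qhc g rho B (psi_h k) (d_h k) = k\<^sup>2" by (rule wit)
  have nz: "nonzero (psi_h k)"
    using k0 by (auto simp: nonzero_def psi_h_def intro!: bexI[of _ 0])
  show "xi_hc2 g rho B = k\<^sup>2"
    unfolding xi_hc2_def
  proof (rule cSup_eq_maximum)
    show "k\<^sup>2 \<in> {Qhc g rho B \<psi> d |\<psi> d. (\<psi>, d) \<in> H01 \<and> nonzero \<psi>}"
      using wit H01_h nz by force
  qed (use bound in auto)
qed

lemma V_Tf: fixes m :: real assumes "0 < m"
  shows "(cosh (m/2) - 2 * sinh (m/2) / m) / (m\<^sup>2 * cosh (m/2)) = (1 - Tf (m/2)) / m\<^sup>2"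
  using assms by (simp add: Tf_def tanh_def field_simps)

lemma psi_v0_pos: assumes "0 < m" shows "0 < psi_v m 0"
proof -
  have "0 < m\<^sup>2 * cosh (m/2)" using assms by simp
  then show ?thesis using Vpos[OF assms] by (simp add: psi_v0 zero_less_divide_iff)
qed

lemma part_ii:
  fixes g rho B :: real
  assumes g: "g > 0" and rho: "rho > 0" and B0: "0 < \<bar>B\<bar>" and B1: "\<bar>B\<bar> < Bc g rho"
  defines "m \<equiv> 2 * Tinv (1 - B\<^sup>2 / (g * rho / 2))"
  shows "0 < m"
    and "\<And>\<psi> d dd. (\<psi>, d, dd) \<in> H02 \<Longrightarrow> Dvc g rho B \<psi> d > 0 \<Longrightarrow> m\<^sup>2 \<le> Qvc g rho B \<psi> d dd"
    and "Dvc g rho B (psi_v m) (d_v m) > 0"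
    and "Qvc g rho B (psi_v m) (d_v m) (dd_v m) = m\<^sup>2"
    and "xi_vc2 g rho B = m\<^sup>2"
proof -
  define c where "c = g * rho / 2"
  have c0: "0 < c" using g rho by (simp add: c_def)
  define r where "r = B\<^sup>2 / c"
  have Bsq: "0 < B\<^sup>2" using B0 by simp
  have r0: "0 < r" "r < 1" using Bsq B_lt[OF g rho B1] c0 by (auto simp: r_def c_def)
  have r1: "0 < 1 - r" "1 - r < 1" using r0 by auto
  have mr: "m = 2 * Tinv (1 - r)" by (simp add: m_def r_def c_def)
  show m0: "0 < m" using Tinv(1)[OF r1] mr by simp
  have Tm: "Tf (m/2) = 1 - r" using Tinv(2)[OF r1] mr by simp
  have V: "(cosh (m/2) - 2 * sinh (m/2) / m) / (m\<^sup>2 * cosh (m/2)) = r / m\<^sup>2"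
    using V_Tf[OF m0] Tm by simp
  have gr: "g * rho = 2 * c" by (simp add: c_def)
  have Bc: "B\<^sup>2 = c * r" using c0 by (simp add: r_def)
  have m2: "0 < m\<^sup>2" using m0 by simp
  show bound: "m\<^sup>2 \<le> Qvc g rho B \<psi> d dd" if H: "(\<psi>, d, dd) \<in> H02" and D: "Dvc g rho B \<psi> d > 0" for \<psi> d dd
  proof -
    have "2 * (\<psi> 0)\<^sup>2 \<le> r / m\<^sup>2 * (L2sq dd + m\<^sup>2 * L2sq d)" using ineq_ii[OF H m0] V by simp
    then have "c * m\<^sup>2 * (2 * (\<psi> 0)\<^sup>2) \<le> c * m\<^sup>2 * (r / m\<^sup>2 * (L2sq dd + m\<^sup>2 * L2sq d))"
      using c0 m2 by (intro mult_left_mono) auto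
    then have "m\<^sup>2 * Dvc g rho B \<psi> d \<le> B\<^sup>2 * L2sq dd"
      unfolding Dvc_def gr using m2 by (simp add: Bc algebra_simps)
    then show ?thesis using D by (simp add: Qvc_def pos_le_divide_eq mult.commute)
  qed
  have H: "(psi_v m, d_v m, dd_v m) \<in> H02" by (rule H02_v[OF m0])
  have eq: "m\<^sup>2 * Dvc g rho B (psi_v m) (d_v m) = B\<^sup>2 * L2sq (dd_v m)"
  proof -
    have "2 * (psi_v m 0)\<^sup>2 = r / m\<^sup>2 * (L2sq (dd_v m) + m\<^sup>2 * L2sq (d_v m))" using eq_ii[OF m0] V by simp
    then have "c * m\<^sup>2 * (2 * (psi_v m 0)\<^sup>2) = c * m\<^sup>2 * (r / m\<^sup>2 * (L2sq (dd_v m) + m\<^sup>2 * L2sq (d_v m)))" by simp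
    then show ?thesis unfolding Dvc_def gr using m2 by (simp add: Bc algebra_simps)
  qed
  have pos: "0 < B\<^sup>2 * L2sq (dd_v m)" using Bsq L2sq_dd_v_pos[OF m0] by simp
  show D: "Dvc g rho B (psi_v m) (d_v m) > 0"
    using eq pos m2 by (metis zero_less_mult_pos)
  have wit: "Qvc g rho B (psi_v m) (d_v m) (dd_v m) = m\<^sup>2"
    using eq D m2 by (simp add: Qvc_def field_simps)
  show "Qvc g rho B (psi_v m) (d_v m) (dd_v m) = m\<^sup>2" by (rule wit)
  show "xi_vc2 g rho B = m\<^sup>2"
    unfolding xi_vc2_def
  proof (rule cInf_eq_minimum)
    show "m\<^sup>2 \<in> {Qvc g rho B \<psi> d dd |\<psi> d dd. (\<psi>, d, dd) \<in> H02 \<and> Dvc g rho B \<psi> d > 0}"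
      using wit H D by force
  qed (use bound in auto)
qed

lemma part_ii_zero:
  fixes g rho :: real
  assumes g: "g > 0" and rho: "rho > 0"
  shows "Dvc g rho 0 (psi_v 1) (d_v 1) > 0"
    and "Qvc g rho 0 (psi_v 1) (d_v 1) (dd_v 1) = 0"
    and "xi_vc2 g rho 0 = 0"
    and "\<And>\<psi> d dd. Qvc g rho 0 \<psi> d dd = 0"
proof -
  show D: "Dvc g rho 0 (psi_v 1) (d_v 1) > 0"
    using psi_v0_pos[of 1] g rho by (simp add: Dvc_def)
  show "Qvc g rho 0 (psi_v 1) (d_v 1) (dd_v 1) = 0" by (simp add: Qvc_def)
  have z: "\<And>\<psi> d dd. Qvc g rho 0 \<psi> d dd = 0" by (simp add: Qvc_def)
  then show "\<And>\<psi> d dd. Qvc g rho 0 \<psi> d dd = 0" .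
  show "xi_vc2 g rho 0 = 0"
    unfolding xi_vc2_def
  proof (rule cInf_eq_minimum)
    show "0 \<in> {Qvc g rho 0 \<psi> d dd |\<psi> d dd. (\<psi>, d, dd) \<in> H02 \<and> Dvc g rho 0 \<psi> d > 0}"
      using z[of "psi_v 1" "d_v 1" "dd_v 1"] H02_v[of 1] D by force
  qed (use z in auto)
qed

lemma TinvA: assumes "0 < y" "0 < r" "r < Tf y" shows "y < Tinv r"
proof -
  have "Tinv (Tf y) < Tinv r" by (rule Tinv_strict) (use assms Tf_lt1[OF assms(1)] in auto)
  then show ?thesis using Tinv_Tf[OF assms(1)] by simp
qed

lemma TinvB: assumes "0 < y" "Tf y < r" "r < 1" shows "Tinv r < y"
proof -
  have "Tinv r < Tinv (Tf y)" by (rule Tinv_strict) (use assms Tf_pos[OF assms(1)] in auto)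
  then show ?thesis using Tinv_Tf[OF assms(1)] by simp
qed

lemma sq_lt: fixes B x :: real assumes "0 \<le> B" "B < sqrt x" shows "B\<^sup>2 < x"
proof -
  have "0 < sqrt x" using assms by linarith
  then have "0 \<le> x" by simp
  have "B\<^sup>2 < (sqrt x)\<^sup>2" using assms by (intro power_strict_mono) auto
  then show ?thesis using \<open>0 \<le> x\<close> by simp
qed

lemma sq_gt: fixes B x :: real assumes "0 \<le> x" "sqrt x < B" shows "x < B\<^sup>2"
proof -
  have "(sqrt x)\<^sup>2 < B\<^sup>2" using assms by (intro power_strict_mono) auto
  then show ?thesis using assms by simp
qed

lemma xi_hc_eq:
  assumes g: "g > 0" and rho: "rho > 0" and B: "B \<in> {0<..<Bc g rho}"
  shows "xi_hc g rho B = Tinv (B\<^sup>2 / (g * rho / 2))"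
proof -
  have "0 < \<bar>B\<bar>" "\<bar>B\<bar> < Bc g rho" using B by auto
  note P = part_iii[OF g rho this]
  show ?thesis unfolding xi_hc_def P(4) using P(1) by simp
qed

lemma xi_vc_eq:
  assumes g: "g > 0" and rho: "rho > 0" and B: "B \<in> {0<..<Bc g rho}"
  shows "xi_vc g rho B = 2 * Tinv (1 - B\<^sup>2 / (g * rho / 2))"
proof -
  have "0 < \<bar>B\<bar>" "\<bar>B\<bar> < Bc g rho" using B by auto
  note P = part_ii[OF g rho this]
  have "sqrt ((2 * Tinv (1 - B\<^sup>2 / (g * rho / 2)))\<^sup>2) = 2 * Tinv (1 - B\<^sup>2 / (g * rho / 2))"
    using P(1) by (intro real_sqrt_unique) auto
  then show ?thesis unfolding xi_vc_def P(5) .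
qed

theorem lemma3p2:
  fixes g rho :: real
  assumes "g > 0" and "rho > 0"
  shows
   "\<comment> \<open>(i)\<close>
    ((\<exists>\<psi> d. (\<psi>, d) \<in> H01 \<and> nonzero \<psi> \<and> Qc g rho \<psi> d = Bc2 g rho) \<and>
     (\<forall>\<psi> d. (\<psi>, d) \<in> H01 \<and> nonzero \<psi> \<longrightarrow> Qc g rho \<psi> d \<le> Bc2 g rho)) \<and>
    \<comment> \<open>(ii)\<close>
    (\<forall>B::real. \<bar>B\<bar> < Bc g rho \<longrightarrow>
       (\<exists>\<psi> d dd. (\<psi>, d, dd) \<in> H02 \<and> Dvc g rho B \<psi> d > 0 \<and>
           Qvc g rho B \<psi> d dd = xi_vc2 g rho B) \<and>
       (\<forall>\<psi> d dd. (\<psi>, d, dd) \<in> H02 \<and> Dvc g rho B \<psi> d > 0 \<longrightarrow>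
           xi_vc2 g rho B \<le> Qvc g rho B \<psi> d dd)) \<and>
    continuous_on {0<..<Bc g rho} (xi_vc g rho) \<and>
    strict_mono_on {0<..<Bc g rho} (xi_vc g rho) \<and>
    (xi_vc g rho \<longlongrightarrow> 0) (at_right 0) \<and>
    filterlim (xi_vc g rho) at_top (at_left (Bc g rho)) \<and>
    \<comment> \<open>(iii)\<close>
    (\<forall>B::real. 0 < \<bar>B\<bar> \<and> \<bar>B\<bar> < Bc g rho \<longrightarrow>
       (\<exists>\<psi> d. (\<psi>, d) \<in> H01 \<and> nonzero \<psi> \<and> Qhc g rho B \<psi> d = xi_hc2 g rho B) \<and>
       (\<forall>\<psi> d. (\<psi>, d) \<in> H01 \<and> nonzero \<psi> \<longrightarrow> Qhc g rho B \<psi> d \<le> xi_hc2 g rho B)) \<and>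
    continuous_on {0<..<Bc g rho} (xi_hc g rho) \<and>
    strict_antimono_on {0<..<Bc g rho} (xi_hc g rho) \<and>
    filterlim (xi_hc g rho) at_top (at_right 0) \<and>
    (xi_hc g rho \<longlongrightarrow> 0) (at_left (Bc g rho))"
proof -
  note g = assms(1) and rho = assms(2)
  define c where "c = g * rho / 2"
  have c0: "0 < c" using g rho by (simp add: c_def)
  have Bcv: "Bc g rho = sqrt c" using Bc_val[OF g rho] by (simp add: c_def)
  have Bc0: "0 < Bc g rho" using Bcv c0 by simp
  have rB: "0 < B\<^sup>2 / c" "B\<^sup>2 / c < 1" if "B \<in> {0<..<Bc g rho}" for B
  proof -
    have "B\<^sup>2 < c" using sq_lt[of B c] that Bcv by auto
    then show "0 < B\<^sup>2 / c" "B\<^sup>2 / c < 1" using that c0 by auto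
  qed
  have hc: "xi_hc g rho B = Tinv (B\<^sup>2 / c)" if "B \<in> {0<..<Bc g rho}" for B
    using xi_hc_eq[OF g rho that] by (simp add: c_def)
  have vc: "xi_vc g rho B = 2 * Tinv (1 - B\<^sup>2 / c)" if "B \<in> {0<..<Bc g rho}" for B
    using xi_vc_eq[OF g rho that] by (simp add: c_def)
  have rmono: "B1\<^sup>2 / c < B2\<^sup>2 / c" if "0 < B1" "B1 < B2" for B1 B2
    using that c0 by (intro divide_strict_right_mono power_strict_mono) auto
  have I: "(\<exists>\<psi> d. (\<psi>, d) \<in> H01 \<and> nonzero \<psi> \<and> Qc g rho \<psi> d = Bc2 g rho) \<and>
     (\<forall>\<psi> d. (\<psi>, d) \<in> H01 \<and> nonzero \<psi> \<longrightarrow> Qc g rho \<psi> d \<le> Bc2 g rho)"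
  proof
    have b: "Bc2 g rho = g * rho / 2" by (rule part_i(3)[OF g rho])
    show "\<exists>\<psi> d. (\<psi>, d) \<in> H01 \<and> nonzero \<psi> \<and> Qc g rho \<psi> d = Bc2 g rho"
      by (rule exI[of _ psi_t], rule exI[of _ d_t]) (simp add: H01_t nonzero_t part_i(2)[OF g rho] b)
    show "\<forall>\<psi> d. (\<psi>, d) \<in> H01 \<and> nonzero \<psi> \<longrightarrow> Qc g rho \<psi> d \<le> Bc2 g rho"
    proof (intro allI impI)
      fix \<psi> d assume "(\<psi>, d) \<in> H01 \<and> nonzero \<psi>"
      then show "Qc g rho \<psi> d \<le> Bc2 g rho" using part_i(1)[OF g rho, of \<psi> d] b by simp
    qed
  qed
  have II: "\<forall>B::real. \<bar>B\<bar> < Bc g rho \<longrightarrow>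
       (\<exists>\<psi> d dd. (\<psi>, d, dd) \<in> H02 \<and> Dvc g rho B \<psi> d > 0 \<and>
           Qvc g rho B \<psi> d dd = xi_vc2 g rho B) \<and>
       (\<forall>\<psi> d dd. (\<psi>, d, dd) \<in> H02 \<and> Dvc g rho B \<psi> d > 0 \<longrightarrow>
           xi_vc2 g rho B \<le> Qvc g rho B \<psi> d dd)"
  proof (intro allI impI)
    fix B :: real assume B: "\<bar>B\<bar> < Bc g rho"
    show "(\<exists>\<psi> d dd. (\<psi>, d, dd) \<in> H02 \<and> Dvc g rho B \<psi> d > 0 \<and>
           Qvc g rho B \<psi> d dd = xi_vc2 g rho B) \<and>
       (\<forall>\<psi> d dd. (\<psi>, d, dd) \<in> H02 \<and> Dvc g rho B \<psi> d > 0 \<longrightarrow>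
           xi_vc2 g rho B \<le> Qvc g rho B \<psi> d dd)"
    proof (cases "B = 0")
      case True
      note P = part_ii_zero[OF g rho]
      show ?thesis unfolding True using P H02_v[of 1] by auto
    next
      case False
      then have "0 < \<bar>B\<bar>" by simp
      note P = part_ii[OF g rho this B]
      show ?thesis using P H02_v[OF P(1)] by (auto simp del: Qvc_def)
    qed
  qed
  have III: "\<forall>B::real. 0 < \<bar>B\<bar> \<and> \<bar>B\<bar> < Bc g rho \<longrightarrow>
       (\<exists>\<psi> d. (\<psi>, d) \<in> H01 \<and> nonzero \<psi> \<and> Qhc g rho B \<psi> d = xi_hc2 g rho B) \<and>
       (\<forall>\<psi> d. (\<psi>, d) \<in> H01 \<and> nonzero \<psi> \<longrightarrow> Qhc g rho B \<psi> d \<le> xi_hc2 g rho B)"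
  proof (intro allI impI)
    fix B :: real assume B: "0 < \<bar>B\<bar> \<and> \<bar>B\<bar> < Bc g rho"
    note P = part_iii[OF g rho B[THEN conjunct1] B[THEN conjunct2]]
    define k where "k = Tinv (B\<^sup>2 / (g * rho / 2))"
    have nz: "nonzero (psi_h k)"
      using P(1) by (auto simp: nonzero_def psi_h_def k_def intro!: bexI[of _ 0])
    show "(\<exists>\<psi> d. (\<psi>, d) \<in> H01 \<and> nonzero \<psi> \<and> Qhc g rho B \<psi> d = xi_hc2 g rho B) \<and>
       (\<forall>\<psi> d. (\<psi>, d) \<in> H01 \<and> nonzero \<psi> \<longrightarrow> Qhc g rho B \<psi> d \<le> xi_hc2 g rho B)"
      using P H01_h[of k] nz unfolding k_def[symmetric] by auto
  qed
  have cvc: "continuous_on {0<..<Bc g rho} (xi_vc g rho)"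
  proof (rule continuous_on_eq[where f="\<lambda>B. 2 * Tinv (1 - B\<^sup>2 / c)"])
    show "continuous_on {0<..<Bc g rho} (\<lambda>B. 2 * Tinv (1 - B\<^sup>2 / c))"
    proof (intro continuous_at_imp_continuous_on ballI)
      fix B assume B: "B \<in> {0<..<Bc g rho}"
      have "isCont (\<lambda>B. Tinv (1 - B\<^sup>2 / c)) B"
        by (rule isCont_o2[where f="\<lambda>B. 1 - B\<^sup>2 / c" and g=Tinv]) (use rB[OF B] in \<open>auto intro!: continuous_intros Tinv_cont\<close>)
      then show "isCont (\<lambda>B. 2 * Tinv (1 - B\<^sup>2 / c)) B" by (intro continuous_intros)
    qed
  qed (use vc in auto)
  have chc: "continuous_on {0<..<Bc g rho} (xi_hc g rho)"
  proof (rule continuous_on_eq[where f="\<lambda>B. Tinv (B\<^sup>2 / c)"])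
    show "continuous_on {0<..<Bc g rho} (\<lambda>B. Tinv (B\<^sup>2 / c))"
    proof (intro continuous_at_imp_continuous_on ballI)
      fix B assume B: "B \<in> {0<..<Bc g rho}"
      show "isCont (\<lambda>B. Tinv (B\<^sup>2 / c)) B"
        by (rule isCont_o2[where f="\<lambda>B. B\<^sup>2 / c" and g=Tinv]) (use rB[OF B] in \<open>auto intro!: continuous_intros Tinv_cont\<close>)
    qed
  qed (use hc in auto)
  have mvc: "strict_mono_on {0<..<Bc g rho} (xi_vc g rho)"
    unfolding monotone_on_def
  proof (intro ballI impI)
    fix x y assume x: "x \<in> {0<..<Bc g rho}" and y: "y \<in> {0<..<Bc g rho}" and xy: "x < y"
    have "Tinv (1 - x\<^sup>2 / c) < Tinv (1 - y\<^sup>2 / c)"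
      using Tinv_strict[of "1 - y\<^sup>2 / c" "1 - x\<^sup>2 / c"] rB[OF x] rB[OF y] rmono[of x y] x xy by auto
    then show "xi_vc g rho x < xi_vc g rho y" using vc[OF x] vc[OF y] by simp
  qed
  have mhc: "strict_antimono_on {0<..<Bc g rho} (xi_hc g rho)"
    unfolding monotone_on_def
  proof (intro ballI impI)
    fix x y assume x: "x \<in> {0<..<Bc g rho}" and y: "y \<in> {0<..<Bc g rho}" and xy: "x < y"
    have "Tinv (y\<^sup>2 / c) < Tinv (x\<^sup>2 / c)"
      using Tinv_strict[of "x\<^sup>2 / c" "y\<^sup>2 / c"] rB[OF x] rB[OF y] rmono[of x y] x xy by auto
    then show "xi_hc g rho y < xi_hc g rho x" using hc[OF x] hc[OF y] by simp
  qed
  have nn_vc: "0 \<le> xi_vc g rho B" if "B \<in> {0<..<Bc g rho}" for B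
    using vc[OF that] Tinv(1)[of "1 - B\<^sup>2 / c"] rB[OF that] by simp
  have nn_hc: "0 \<le> xi_hc g rho B" if "B \<in> {0<..<Bc g rho}" for B
    using hc[OF that] Tinv(1)[of "B\<^sup>2 / c"] rB[OF that] by simp
  have lvc0: "(xi_vc g rho \<longlongrightarrow> 0) (at_right 0)"
  proof (rule order_tendstoI)
    fix a :: real assume "a < 0"
    then show "\<forall>\<^sub>F x in at_right 0. a < xi_vc g rho x"
      unfolding eventually_at_right_field using Bc0 nn_vc by (intro exI[of _ "Bc g rho"]) (auto intro: less_le_trans)
  next
    fix a :: real assume a: "0 < a"
    define \<delta> where "\<delta> = 1 - Tf (a/2)"
    have d0: "0 < \<delta>" using Tf_lt1[of "a/2"] a by (simp add: \<delta>_def)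
    define b where "b = min (Bc g rho) (sqrt (c * \<delta>))"
    have b0: "0 < b" using Bc0 c0 d0 by (simp add: b_def)
    show "\<forall>\<^sub>F x in at_right 0. xi_vc g rho x < a"
      unfolding eventually_at_right_field
    proof (intro exI[of _ b] conjI allI impI)
      fix B :: real assume B0: "0 < B" and Bb: "B < b"
      have Bin: "B \<in> {0<..<Bc g rho}" using B0 Bb by (auto simp: b_def)
      have "B\<^sup>2 < c * \<delta>" using sq_lt[of B "c * \<delta>"] B0 Bb by (auto simp: b_def)
      then have "B\<^sup>2 / c < \<delta>" using c0 by (simp add: divide_less_eq mult.commute)
      then have "Tf (a/2) < 1 - B\<^sup>2 / c" by (simp add: \<delta>_def)
      then have "Tinv (1 - B\<^sup>2 / c) < a/2" using TinvB[of "a/2"] a rB[OF Bin] by auto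
      then show "xi_vc g rho B < a" using vc[OF Bin] by simp
    qed (rule b0)
  qed
  have lvc1: "filterlim (xi_vc g rho) at_top (at_left (Bc g rho))"
    unfolding filterlim_at_top
  proof (intro allI)
    fix Z :: real
    define y where "y = max (Z/2) 1"
    have y0: "0 < y" by (simp add: y_def)
    define t where "t = Tf y"
    have t: "0 < t" "t < 1" using Tf_pos[OF y0] Tf_lt1[OF y0] by (auto simp: t_def)
    define b where "b = sqrt (c * (1 - t))"
    have b: "0 \<le> b" "b < Bc g rho" using t c0 Bcv by (auto simp: b_def)
    show "\<forall>\<^sub>F x in at_left (Bc g rho). Z \<le> xi_vc g rho x"
      unfolding eventually_at_left_field
    proof (intro exI[of _ b] conjI allI impI)
      fix B :: real assume Bb: "b < B" and B1: "B < Bc g rho"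
      have Bin: "B \<in> {0<..<Bc g rho}" using Bb B1 b by auto
      have "c * (1 - t) < B\<^sup>2" using sq_gt[of "c * (1 - t)" B] Bb t c0 by (auto simp: b_def)
      then have "1 - B\<^sup>2 / c < t" using c0 by (simp add: field_simps)
      then have "y < Tinv (1 - B\<^sup>2 / c)" using TinvA[OF y0] rB[OF Bin] by (simp add: t_def)
      then show "Z \<le> xi_vc g rho B" using vc[OF Bin] by (simp add: y_def)
    qed (rule b(2))
  qed
  have lhc0: "filterlim (xi_hc g rho) at_top (at_right 0)"
    unfolding filterlim_at_top
  proof (intro allI)
    fix Z :: real
    define y where "y = max Z 1"
    have y0: "0 < y" by (simp add: y_def)
    define t where "t = Tf y"
    have t: "0 < t" "t < 1" using Tf_pos[OF y0] Tf_lt1[OF y0] by (auto simp: t_def)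
    define b where "b = min (Bc g rho) (sqrt (c * t))"
    have b0: "0 < b" using Bc0 c0 t by (simp add: b_def)
    show "\<forall>\<^sub>F x in at_right 0. Z \<le> xi_hc g rho x"
      unfolding eventually_at_right_field
    proof (intro exI[of _ b] conjI allI impI)
      fix B :: real assume B0: "0 < B" and Bb: "B < b"
      have Bin: "B \<in> {0<..<Bc g rho}" using B0 Bb by (auto simp: b_def)
      have "B\<^sup>2 < c * t" using sq_lt[of B "c * t"] B0 Bb by (auto simp: b_def)
      then have "B\<^sup>2 / c < t" using c0 by (simp add: divide_less_eq mult.commute)
      then have "y < Tinv (B\<^sup>2 / c)" using TinvA[OF y0] rB[OF Bin] by (simp add: t_def)
      then show "Z \<le> xi_hc g rho B" using hc[OF Bin] by (simp add: y_def)
    qed (rule b0)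
  qed
  have lhc1: "(xi_hc g rho \<longlongrightarrow> 0) (at_left (Bc g rho))"
  proof (rule order_tendstoI)
    fix a :: real assume "a < 0"
    then show "\<forall>\<^sub>F x in at_left (Bc g rho). a < xi_hc g rho x"
      unfolding eventually_at_left_field using Bc0 nn_hc by (intro exI[of _ 0]) (auto intro: less_le_trans)
  next
    fix a :: real assume a: "0 < a"
    define t where "t = Tf a"
    have t: "0 < t" "t < 1" using Tf_pos[OF a] Tf_lt1[OF a] by (auto simp: t_def)
    define b where "b = sqrt (c * t)"
    have b: "0 \<le> b" "b < Bc g rho" using t c0 Bcv by (auto simp: b_def)
    show "\<forall>\<^sub>F x in at_left (Bc g rho). xi_hc g rho x < a"
      unfolding eventually_at_left_field
    proof (intro exI[of _ b] conjI allI impI)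
      fix B :: real assume Bb: "b < B" and B1: "B < Bc g rho"
      have Bin: "B \<in> {0<..<Bc g rho}" using Bb B1 b by auto
      have "c * t < B\<^sup>2" using sq_gt[of "c * t" B] Bb t c0 by (auto simp: b_def)
      then have "t < B\<^sup>2 / c" using c0 by (simp add: field_simps)
      then have "Tinv (B\<^sup>2 / c) < a" using TinvB[OF a] rB[OF Bin] by (simp add: t_def)
      then show "xi_hc g rho B < a" using hc[OF Bin] by simp
    qed (rule b(2))
  qed
  show ?thesis using I II III cvc chc mvc mhc lvc0 lvc1 lhc0 lhc1 by blast
qed

end
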